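(* Let $n\ge1$, $p\ge4$, $\mathbb{T}^n=\mathbb{R}^n/\mathbb{Z}^n$, and $b\in C^\infty(\mathbb{T}^n\times[0,\infty);\mathbb{R}^n)$ with $\|b\|_{C^k}<\infty$ for all $k$. Let $W_t$ be a standard $n$-dimensional Brownian motion; for $\varepsilon>0$ let $(X^\varepsilon_t,V^\varepsilon_t)$ solve $dX^\varepsilon_t=V^\varepsilon_tdt$, $dV^\varepsilon_t=\frac1\varepsilon(b(X^\varepsilon_t,t)-V^\varepsilon_t)dt+\sqrt{2/\varepsilon}\,dW_t$, with $X^\varepsilon_0=x$ deterministic and $\tilde V^\varepsilon_0:=V^\varepsilon_0-b(x,0)$ satisfying $\mathbf{E}\tilde V^\varepsilon_0=0$, $\mathbf{E}|\tilde V^\varepsilon_0|^p<\infty$. Let $Y_t=X^\varepsilon_t-\mathbf{E}X^\varepsilon_t$. Then there exist $C_1,C_2>0$, depending only on $b$ (and on $\mathbf{E}|\tilde V^\varepsilon_0|^4$), such that for all $t\ge0$ $$\mathbf{E}|Y_t|^4\le C_1(\varepsilon^2t^2+\varepsilon^4)e^{C_2t} .$$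
   Context: For $f$ on $S=\mathbb{T}^n\times[0,\infty)$, $\|f\|_{C^k}=\max_{|\alpha|\le k}\sup_{z\in S}|D^\alpha f(z)|$. $b$ is viewed as $\mathbb{Z}^n$-periodic in $x$ on $\mathbb{R}^n$ and $X^\varepsilon_t\in\mathbb{R}^n$ is the lifted position, so $\mathbf{E}X^\varepsilon_t\in\mathbb{R}^n$. $V^\varepsilon_0$ is measurable with respect to the initial sigma-algebra of the filtration of $W$. *)

theory Defs
  imports "HOL-Probability.Probability"
begin

text \<open>Df us z is the iterated
  derivative of f at z applied to the directions in the list us; the bound over
  directions from Basis of length k is the C^k norm condition (max over partial
  derivatives of order exactly k).\<close>
definition smooth_bounded :: "('a::euclidean_space \<Rightarrow> 'b::real_normed_vector) \<Rightarrow> 'a set \<Rightarrow> bool" where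
  "smooth_bounded f S \<longleftrightarrow>
     (\<exists>Df :: 'a list \<Rightarrow> 'a \<Rightarrow> 'b.
        (\<forall>z\<in>S. Df [] z = f z) \<and>
        (\<forall>us. \<forall>z\<in>S. (Df us has_derivative (\<lambda>h. Df (h # us) z)) (at z within S)) \<and>
        (\<forall>k. \<exists>B. \<forall>us z. length us = k \<longrightarrow> set us \<subseteq> Basis \<longrightarrow> z \<in> S \<longrightarrow> norm (Df us z) \<le> B))"

definition is_BM1 :: "'w measure \<Rightarrow> (real \<Rightarrow> 'w \<Rightarrow> real) \<Rightarrow> bool" where
  "is_BM1 M B \<longleftrightarrow>
     (\<forall>t\<ge>0. B t \<in> borel_measurable M) \<and>
     (\<forall>\<omega>\<in>space M. B 0 \<omega> = 0 \<and> continuous_on {0..} (\<lambda>t. B t \<omega>)) \<and>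
     (\<forall>s t. 0 \<le> s \<and> s < t \<longrightarrow>
        distributed M lborel (\<lambda>\<omega>. B t \<omega> - B s \<omega>) (\<lambda>y. ennreal (normal_density 0 (sqrt (t - s)) y))) \<and>
     (\<forall>(ts :: nat \<Rightarrow> real) k. (\<forall>j<k. 0 \<le> ts j \<and> ts j < ts (Suc j)) \<longrightarrow>
        prob_space.indep_vars M (\<lambda>_. borel) (\<lambda>j \<omega>. B (ts (Suc j)) \<omega> - B (ts j) \<omega>) {..<k})"

definition is_std_BM :: "'w measure \<Rightarrow> (real \<Rightarrow> 'w \<Rightarrow> real^'n) \<Rightarrow> bool" where
  "is_std_BM M W \<longleftrightarrow>
     prob_space M \<and>
     (\<forall>i. is_BM1 M (\<lambda>t \<omega>. W t \<omega> $ i)) \<and>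
     prob_space.indep_vars M (\<lambda>_. PiM {0..} (\<lambda>_. borel))
        (\<lambda>i \<omega>. \<lambda>t\<in>{0..}. W t \<omega> $ i) UNIV"

text \<open>(X,V) solves dX = V dt, dV = (1/eps)(b(X,t) - V) dt + sqrt(2/eps) dW, X_0 = x,
  written in integral form (additive noise, so no stochastic integral is needed).\<close>
definition langevin_solution ::
  "'w measure \<Rightarrow> (real^'n \<Rightarrow> real \<Rightarrow> real^'n) \<Rightarrow> real \<Rightarrow> real^'n \<Rightarrow>
   (real \<Rightarrow> 'w \<Rightarrow> real^'n) \<Rightarrow> (real \<Rightarrow> 'w \<Rightarrow> real^'n) \<Rightarrow> (real \<Rightarrow> 'w \<Rightarrow> real^'n) \<Rightarrow> bool" where
  "langevin_solution M b \<epsilon> x W X V \<longleftrightarrow>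
     (\<forall>t\<ge>0. X t \<in> borel_measurable M \<and> V t \<in> borel_measurable M) \<and>
     (AE \<omega> in M. continuous_on {0..} (\<lambda>t. X t \<omega>) \<and> continuous_on {0..} (\<lambda>t. V t \<omega>) \<and>
        (\<forall>t\<ge>0. X t \<omega> = x + integral {0..t} (\<lambda>s. V s \<omega>) \<and>
                V t \<omega> = V 0 \<omega> + (1 / \<epsilon>) *\<^sub>R integral {0..t} (\<lambda>s. b (X s \<omega>) s - V s \<omega>)
                         + sqrt (2 / \<epsilon>) *\<^sub>R W t \<omega>))"

end

theory Submission
  imports Defs
begin



lemma tangent4: "(a::real)^4 + 4*a^3*(x-a) \<le> x^4"
proof -
  have "x^4 - (a^4 + 4*a^3*(x-a)) = (x-a)^2*((x+a)^2 + 2*a^2)"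
    by (simp add: algebra_simps power2_eq_square power4_eq_xxxx power3_eq_cube)
  moreover have "(x-a)^2*((x+a)^2 + 2*a^2) \<ge> 0" by simp
  ultimately show ?thesis by linarith
qed

lemma jensen4_integral:
  fixes k g :: "real \<Rightarrow> real"
  assumes k0: "\<And>s. s \<in> S \<Longrightarrow> 0 \<le> k s"
    and ik: "k integrable_on S" and ikg: "(\<lambda>s. k s * g s) integrable_on S"
    and ikg4: "(\<lambda>s. k s * g s ^ 4) integrable_on S"
    and K: "integral S k > 0"
  shows "(integral S (\<lambda>s. k s * g s))^4 \<le> (integral S k)^3 * integral S (\<lambda>s. k s * g s ^ 4)"
proof -
  define K where "K = integral S k"
  define m where "m = integral S (\<lambda>s. k s * g s)"
  define c where "c = m / K"
  have pt: "k s * (c^4 + 4*c^3*(g s - c)) \<le> k s * g s ^ 4" if "s \<in> S" for s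
    using k0[OF that] tangent4[of c "g s"] by (simp add: mult_left_mono)
  have eq: "(\<lambda>s. k s * (c^4 + 4*c^3*(g s - c))) = (\<lambda>s. (c^4 - 4*c^4) * k s + 4*c^3 * (k s * g s))"
    by (auto simp: algebra_simps power4_eq_xxxx power3_eq_cube)
  have ia: "(\<lambda>s. (c^4 - 4*c^4) * k s) integrable_on S" using integrable_cmul[OF ik, of "c^4 - 4*c^4"] by simp
  have ib: "(\<lambda>s. 4*c^3 * (k s * g s)) integrable_on S" using integrable_cmul[OF ikg, of "4*c^3"] by simp
  have i1: "(\<lambda>s. k s * (c^4 + 4*c^3*(g s - c))) integrable_on S"
    unfolding eq using integrable_add[OF ia ib] .
  have "integral S (\<lambda>s. k s * (c^4 + 4*c^3*(g s - c))) = (c^4 - 4*c^4) * K + 4*c^3 * m"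
    unfolding eq K_def m_def integral_add[OF ia ib] integral_mult_right by simp
  also have "\<dots> = m^4 / K^3" using K unfolding c_def K_def[symmetric]
    by (simp add: field_simps power4_eq_xxxx power3_eq_cube)
  finally have "m^4 / K^3 \<le> integral S (\<lambda>s. k s * g s ^ 4)"
    using integral_le[OF i1 ikg4 pt] by simp
  then show ?thesis using K unfolding K_def[symmetric] m_def[symmetric]
    by (simp add: field_simps)
qed




lemma gronwall_simple:
  fixes u r :: "real \<Rightarrow> real"
  assumes L: "0 \<le> L" and T: "0 \<le> T"
    and cu: "continuous_on {0..T} u" and cr: "continuous_on {0..T} r"
    and r0: "\<And>s. s \<in> {0..T} \<Longrightarrow> 0 \<le> r s"
    and H: "\<And>t. t \<in> {0..T} \<Longrightarrow> u t \<le> r t + L * integral {0..t} u"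
  shows "u T \<le> r T + L * exp (L * T) * integral {0..T} r"
proof -
  define \<phi> where "\<phi> t = integral {0..t} u" for t
  define \<rho> where "\<rho> t = integral {0..t} (\<lambda>s. exp (- L * s) * r s)" for t
  define \<psi> where "\<psi> t = exp (- L * t) * \<phi> t - \<rho> t" for t
  have cer: "continuous_on {0..T} (\<lambda>s. exp (- L * s) * r s)"
    by (intro continuous_intros cr)
  have d\<phi>: "(\<phi> has_field_derivative u t) (at t within {0..T})" if "t \<in> {0..T}" for t
    unfolding \<phi>_def has_real_derivative_iff_has_vector_derivative
    by (rule integral_has_vector_derivative[OF cu that])
  have d\<rho>: "(\<rho> has_field_derivative exp (- L * t) * r t) (at t within {0..T})" if "t \<in> {0..T}" for t
    unfolding \<rho>_def has_real_derivative_iff_has_vector_derivative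
    using integral_has_vector_derivative[OF cer that] by simp
  define d where "d t = exp (- L * t) * u t - L * exp (- L * t) * \<phi> t - exp (- L * t) * r t" for t
  have d\<psi>: "(\<psi> has_field_derivative d t) (at t within {0..T})" if "t \<in> {0..T}" for t
  proof -
    have "((\<lambda>t. exp (- L * t)) has_field_derivative (exp (- L * t) * (-L))) (at t within {0..T})"
      by (auto intro!: derivative_eq_intros)
    note e = this
    show ?thesis using DERIV_diff[OF DERIV_mult[OF e d\<phi>[OF that]] d\<rho>[OF that]]
      unfolding \<psi>_def d_def by (simp add: algebra_simps)
  qed
  have dle: "d t \<le> 0" if "t \<in> {0..T}" for t
  proof -
    have "u t - L * \<phi> t - r t \<le> 0" using H[OF that] unfolding \<phi>_def by simp
    then have "exp (- L * t) * (u t - L * \<phi> t - r t) \<le> 0"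
      by (simp add: mult_nonneg_nonpos)
    then show ?thesis unfolding d_def by (simp add: algebra_simps)
  qed
  have "\<exists>x\<in>{0..T}. \<psi> T - \<psi> 0 = (\<lambda>h. d x * h) (T - 0)"
  proof (rule mvt_very_simple[OF T])
    fix x assume "0 \<le> x" "x \<le> T"
    then show "(\<psi> has_derivative (\<lambda>h. d x * h)) (at x within {0..T})"
      using d\<psi>[of x] unfolding has_field_derivative_def by auto
  qed
  then obtain \<xi> where \<xi>: "\<xi> \<in> {0..T}" "\<psi> T - \<psi> 0 = d \<xi> * T" by auto
  have "\<psi> 0 = 0" unfolding \<psi>_def \<phi>_def \<rho>_def by simp
  then have "\<psi> T \<le> 0" using \<xi> dle[OF \<xi>(1)] T by (simp add: mult_nonpos_nonneg)
  then have 1: "exp (- L * T) * \<phi> T \<le> \<rho> T" unfolding \<psi>_def by simp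
  have "\<rho> T \<le> integral {0..T} r" unfolding \<rho>_def
  proof (rule integral_le)
    show "(\<lambda>s. exp (- L * s) * r s) integrable_on {0..T}" using cer integrable_continuous_interval by blast
    show "r integrable_on {0..T}" using cr integrable_continuous_interval by blast
    fix s assume s: "s \<in> {0..T}"
    have "exp (- L * s) \<le> 1" using L s by simp
    then show "exp (- L * s) * r s \<le> r s" using r0[OF s] by (simp add: mult_left_le_one_le)
  qed
  with 1 have "exp (- L * T) * \<phi> T \<le> integral {0..T} r" by simp
  then have "exp (L * T) * (exp (- L * T) * \<phi> T) \<le> exp (L * T) * integral {0..T} r"
    by (simp add: mult_left_mono)
  moreover have "exp (L * T) * (exp (- L * T) * \<phi> T) = \<phi> T"
  proof -
    have ee: "exp (L * T) * exp (- L * T) = 1" by (simp add: mult_exp_exp)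
    show ?thesis by (simp only: mult.assoc[symmetric] ee mult_1_left)
  qed
  ultimately have "\<phi> T \<le> exp (L * T) * integral {0..T} r" by linarith
  then have "L * \<phi> T \<le> L * exp (L * T) * integral {0..T} r"
    using mult_left_mono[OF _ L] by (simp add: mult.assoc)
  then show ?thesis using H[of T] T unfolding \<phi>_def by simp
qed




lemma hvd_cmul:
  "(f has_vector_derivative f') (at x within s) \<Longrightarrow> ((\<lambda>x. c *\<^sub>R f x) has_vector_derivative (c *\<^sub>R f')) (at x within s)"
  using has_vector_derivative_scaleR[OF DERIV_const[of c], of f f'] by simp

lemma langevin_pathwise:
  fixes X V W \<beta> :: "real \<Rightarrow> 'a::banach" and x :: 'a
  assumes \<epsilon>: "\<epsilon> > 0" and T: "0 \<le> T"
    and cV: "continuous_on {0..T} V" and cW: "continuous_on {0..T} W" and c\<beta>: "continuous_on {0..T} \<beta>"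
    and hX: "\<And>t. t \<in> {0..T} \<Longrightarrow> X t = x + integral {0..t} V"
    and hV: "\<And>t. t \<in> {0..T} \<Longrightarrow> V t = V 0 + (1/\<epsilon>) *\<^sub>R integral {0..t} (\<lambda>s. \<beta> s - V s) + c *\<^sub>R W t"
  shows "X T = x + (\<epsilon> * (1 - exp (- T / \<epsilon>))) *\<^sub>R V 0
     + integral {0..T} (\<lambda>s. (1 - exp (- (T - s) / \<epsilon>)) *\<^sub>R \<beta> s)
     + c *\<^sub>R integral {0..T} (\<lambda>s. exp (- (T - s) / \<epsilon>) *\<^sub>R W s)"
proof -
  define G where "G t = integral {0..t} (\<lambda>s. \<beta> s - V s)" for t
  define Bf where "Bf t = integral {0..t} (\<lambda>s. exp (s / \<epsilon>) *\<^sub>R \<beta> s)" for t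
  define Cw where "Cw t = integral {0..t} (\<lambda>s. exp (s / \<epsilon>) *\<^sub>R W s)" for t
  define A where "A t = integral {0..t} \<beta>" for t
  define IV where "IV t = integral {0..t} V" for t
  have c1: "continuous_on {0..T} (\<lambda>s. \<beta> s - V s)" by (intro continuous_intros cV c\<beta>)
  have c2: "continuous_on {0..T} (\<lambda>s. exp (s / \<epsilon>) *\<^sub>R \<beta> s)" using \<epsilon> by (intro continuous_intros c\<beta>) auto
  have c3: "continuous_on {0..T} (\<lambda>s. exp (s / \<epsilon>) *\<^sub>R W s)" using \<epsilon> by (intro continuous_intros cW) auto
  have dG: "(G has_vector_derivative (\<beta> t - V t)) (at t within {0..T})" if "t \<in> {0..T}" for t
    unfolding G_def by (rule integral_has_vector_derivative[OF c1 that])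
  have dBf: "(Bf has_vector_derivative (exp (t / \<epsilon>) *\<^sub>R \<beta> t)) (at t within {0..T})" if "t \<in> {0..T}" for t
    unfolding Bf_def using integral_has_vector_derivative[OF c2 that] .
  have dCw: "(Cw has_vector_derivative (exp (t / \<epsilon>) *\<^sub>R W t)) (at t within {0..T})" if "t \<in> {0..T}" for t
    unfolding Cw_def using integral_has_vector_derivative[OF c3 that] .
  have dA: "(A has_vector_derivative \<beta> t) (at t within {0..T})" if "t \<in> {0..T}" for t
    unfolding A_def using integral_has_vector_derivative[OF c\<beta> that] .
  have dIV: "(IV has_vector_derivative V t) (at t within {0..T})" if "t \<in> {0..T}" for t
    unfolding IV_def using integral_has_vector_derivative[OF cV that] .
  have ep: "((\<lambda>t. exp (t / \<epsilon>)) has_field_derivative (exp (t / \<epsilon>) * (1 / \<epsilon>))) (at t within {0..T})" for t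
    using \<epsilon> by (auto intro!: derivative_eq_intros)
  have em: "((\<lambda>t. exp (- t / \<epsilon>)) has_field_derivative (exp (- t / \<epsilon>) * (- 1 / \<epsilon>))) (at t within {0..T})" for t
    using \<epsilon> by (auto intro!: derivative_eq_intros)
  have eprod: "exp (- t / \<epsilon>) * exp (t / \<epsilon>) = 1" for t
    by (simp add: mult_exp_exp)
  have eprod': "exp (- (t / \<epsilon>)) * exp (t / \<epsilon>) = 1" for t
    by (simp add: mult_exp_exp)
  have UG: "V 0 + (1/\<epsilon>) *\<^sub>R G t = V t - c *\<^sub>R W t" if "t \<in> {0..T}" for t
    using hV[OF that] unfolding G_def by simp
  define \<Phi> where "\<Phi> t = exp (t / \<epsilon>) *\<^sub>R (V 0 + (1/\<epsilon>) *\<^sub>R G t) - (1/\<epsilon>) *\<^sub>R (Bf t - c *\<^sub>R Cw t)" for t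
  have d\<Phi>: "(\<Phi> has_vector_derivative 0) (at t within {0..T})" if t: "t \<in> {0..T}" for t
  proof -
    have g1: "((\<lambda>t. V 0 + (1/\<epsilon>) *\<^sub>R G t) has_vector_derivative ((1/\<epsilon>) *\<^sub>R (\<beta> t - V t))) (at t within {0..T})"
      using has_vector_derivative_add[OF has_vector_derivative_const hvd_cmul[OF dG[OF t], of "1/\<epsilon>"]] by simp
    have p: "((\<lambda>t. exp (t / \<epsilon>) *\<^sub>R (V 0 + (1/\<epsilon>) *\<^sub>R G t)) has_vector_derivative
        (exp (t / \<epsilon>) *\<^sub>R ((1/\<epsilon>) *\<^sub>R (\<beta> t - V t)) + (exp (t / \<epsilon>) * (1 / \<epsilon>)) *\<^sub>R (V 0 + (1/\<epsilon>) *\<^sub>R G t))) (at t within {0..T})"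
      by (rule has_vector_derivative_scaleR[OF ep g1])
    have q: "((\<lambda>t. (1/\<epsilon>) *\<^sub>R (Bf t - c *\<^sub>R Cw t)) has_vector_derivative
        ((1/\<epsilon>) *\<^sub>R (exp (t / \<epsilon>) *\<^sub>R \<beta> t - c *\<^sub>R (exp (t / \<epsilon>) *\<^sub>R W t)))) (at t within {0..T})"
      by (rule hvd_cmul[OF has_vector_derivative_diff[OF dBf[OF t] hvd_cmul[OF dCw[OF t]]]])
    have r: "(\<Phi> has_vector_derivative
        (exp (t / \<epsilon>) *\<^sub>R ((1/\<epsilon>) *\<^sub>R (\<beta> t - V t)) + (exp (t / \<epsilon>) * (1 / \<epsilon>)) *\<^sub>R (V 0 + (1/\<epsilon>) *\<^sub>R G t)
         - (1/\<epsilon>) *\<^sub>R (exp (t / \<epsilon>) *\<^sub>R \<beta> t - c *\<^sub>R (exp (t / \<epsilon>) *\<^sub>R W t)))) (at t within {0..T})"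
      unfolding \<Phi>_def[abs_def] by (rule has_vector_derivative_diff[OF p q])
    show ?thesis
    proof (rule has_vector_derivative_eq_rhs[OF r])
      show "exp (t / \<epsilon>) *\<^sub>R ((1/\<epsilon>) *\<^sub>R (\<beta> t - V t)) + (exp (t / \<epsilon>) * (1 / \<epsilon>)) *\<^sub>R (V 0 + (1/\<epsilon>) *\<^sub>R G t)
         - (1/\<epsilon>) *\<^sub>R (exp (t / \<epsilon>) *\<^sub>R \<beta> t - c *\<^sub>R (exp (t / \<epsilon>) *\<^sub>R W t)) = 0"
        unfolding UG[OF t] by (simp add: algebra_simps)
    qed
  qed
  obtain C0 where C0: "\<And>t. t \<in> {0..T} \<Longrightarrow> \<Phi> t = C0"
    using has_derivative_zero_constant[of "{0..T}" \<Phi>] d\<Phi>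
    unfolding has_vector_derivative_def by auto
  have \<Phi>0: "\<Phi> 0 = V 0" unfolding \<Phi>_def G_def Bf_def Cw_def by simp
  have step1: "V t = exp (- t / \<epsilon>) *\<^sub>R V 0 + (exp (- t / \<epsilon>) / \<epsilon>) *\<^sub>R (Bf t - c *\<^sub>R Cw t) + c *\<^sub>R W t"
    if t: "t \<in> {0..T}" for t
  proof -
    have "\<Phi> t = V 0" using C0[OF t] C0[of 0] T \<Phi>0 by simp
    then have "exp (t / \<epsilon>) *\<^sub>R (V t - c *\<^sub>R W t) = V 0 + (1/\<epsilon>) *\<^sub>R (Bf t - c *\<^sub>R Cw t)"
      unfolding \<Phi>_def UG[OF t] by (simp add: algebra_simps)
    then have "exp (- t / \<epsilon>) *\<^sub>R (exp (t / \<epsilon>) *\<^sub>R (V t - c *\<^sub>R W t)) = exp (- t / \<epsilon>) *\<^sub>R (V 0 + (1/\<epsilon>) *\<^sub>R (Bf t - c *\<^sub>R Cw t))"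
      by simp
    then have "V t - c *\<^sub>R W t = exp (- t / \<epsilon>) *\<^sub>R (V 0 + (1/\<epsilon>) *\<^sub>R (Bf t - c *\<^sub>R Cw t))"
      by (simp add: eprod eprod')
    then show ?thesis by (simp add: algebra_simps)
  qed
  define \<Xi> where "\<Xi> t = x + (\<epsilon> * (1 - exp (- t / \<epsilon>))) *\<^sub>R V 0 + A t - exp (- t / \<epsilon>) *\<^sub>R Bf t + (c * exp (- t / \<epsilon>)) *\<^sub>R Cw t" for t
  define \<Psi> where "\<Psi> t = (x + IV t) - \<Xi> t" for t
  have d\<Psi>: "(\<Psi> has_vector_derivative 0) (at t within {0..T})" if t: "t \<in> {0..T}" for t
  proof -
    have e1: "((\<lambda>t. \<epsilon> * (1 - exp (- t / \<epsilon>))) has_field_derivative (\<epsilon> * (0 - exp (- t / \<epsilon>) * (- 1 / \<epsilon>)))) (at t within {0..T})"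
      by (intro DERIV_cmult DERIV_diff DERIV_const em)
    have e2: "((\<lambda>t. c * exp (- t / \<epsilon>)) has_field_derivative (c * (exp (- t / \<epsilon>) * (- 1 / \<epsilon>)))) (at t within {0..T})"
      by (intro DERIV_cmult em)
    have r: "(\<Psi> has_vector_derivative
       (0 + V t) - ((((0 + ((\<epsilon> * (1 - exp (- t / \<epsilon>))) *\<^sub>R 0 + (\<epsilon> * (0 - exp (- t / \<epsilon>) * (- 1 / \<epsilon>))) *\<^sub>R V 0)) + \<beta> t)
           - (exp (- t / \<epsilon>) *\<^sub>R (exp (t / \<epsilon>) *\<^sub>R \<beta> t) + (exp (- t / \<epsilon>) * (- 1 / \<epsilon>)) *\<^sub>R Bf t))
           + ((c * exp (- t / \<epsilon>)) *\<^sub>R (exp (t / \<epsilon>) *\<^sub>R W t) + (c * (exp (- t / \<epsilon>) * (- 1 / \<epsilon>))) *\<^sub>R Cw t))) (at t within {0..T})"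
      unfolding \<Psi>_def[abs_def] \<Xi>_def[abs_def]
      by (intro has_vector_derivative_diff has_vector_derivative_add has_vector_derivative_const
            has_vector_derivative_scaleR e1 e2 em dA[OF t] dBf[OF t] dCw[OF t] dIV[OF t])
    show ?thesis
    proof (rule has_vector_derivative_eq_rhs[OF r])
      have a: "exp (- t / \<epsilon>) *\<^sub>R (exp (t / \<epsilon>) *\<^sub>R z) = z" for z :: 'a
        by (simp add: eprod eprod')
      show "(0 + V t) - ((((0 + ((\<epsilon> * (1 - exp (- t / \<epsilon>))) *\<^sub>R 0 + (\<epsilon> * (0 - exp (- t / \<epsilon>) * (- 1 / \<epsilon>))) *\<^sub>R V 0)) + \<beta> t)
           - (exp (- t / \<epsilon>) *\<^sub>R (exp (t / \<epsilon>) *\<^sub>R \<beta> t) + (exp (- t / \<epsilon>) * (- 1 / \<epsilon>)) *\<^sub>R Bf t))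
           + ((c * exp (- t / \<epsilon>)) *\<^sub>R (exp (t / \<epsilon>) *\<^sub>R W t) + (c * (exp (- t / \<epsilon>) * (- 1 / \<epsilon>))) *\<^sub>R Cw t)) = 0"
        unfolding scaleR_scaleR[of c, symmetric] a step1[OF t] using \<epsilon>
        by (simp add: algebra_simps)
    qed
  qed
  obtain C1 where C1: "\<And>t. t \<in> {0..T} \<Longrightarrow> \<Psi> t = C1"
    using has_derivative_zero_constant[of "{0..T}" \<Psi>] d\<Psi>
    unfolding has_vector_derivative_def by auto
  have \<Psi>0: "\<Psi> 0 = 0" unfolding \<Psi>_def \<Xi>_def IV_def A_def Bf_def Cw_def by simp
  have "\<Psi> T = 0" using C1[of T] C1[of 0] T \<Psi>0 by simp
  then have XT: "X T = \<Xi> T" using hX[of T] T unfolding \<Psi>_def IV_def by simp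
  have i1: "integral {0..T} (\<lambda>s. (1 - exp (- (T - s) / \<epsilon>)) *\<^sub>R \<beta> s) = A T - exp (- T / \<epsilon>) *\<^sub>R Bf T"
  proof -
    have "(\<lambda>s. (1 - exp (- (T - s) / \<epsilon>)) *\<^sub>R \<beta> s) = (\<lambda>s. \<beta> s - exp (- T / \<epsilon>) *\<^sub>R (exp (s / \<epsilon>) *\<^sub>R \<beta> s))"
    proof
      fix s
      have "exp (- (T - s) / \<epsilon>) = exp (- T / \<epsilon>) * exp (s / \<epsilon>)"
        by (simp add: mult_exp_exp diff_divide_distrib)
      then show "(1 - exp (- (T - s) / \<epsilon>)) *\<^sub>R \<beta> s = \<beta> s - exp (- T / \<epsilon>) *\<^sub>R (exp (s / \<epsilon>) *\<^sub>R \<beta> s)"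
        by (simp add: algebra_simps)
    qed
    moreover have "integral {0..T} (\<lambda>s. \<beta> s - exp (- T / \<epsilon>) *\<^sub>R (exp (s / \<epsilon>) *\<^sub>R \<beta> s))
       = integral {0..T} \<beta> - integral {0..T} (\<lambda>s. exp (- T / \<epsilon>) *\<^sub>R (exp (s / \<epsilon>) *\<^sub>R \<beta> s))"
      by (rule integral_diff[OF integrable_continuous_interval[OF c\<beta>] integrable_cmul[OF integrable_continuous_interval[OF c2]]])
    moreover have "\<dots> = A T - exp (- T / \<epsilon>) *\<^sub>R Bf T"
      unfolding A_def Bf_def integral_cmul ..
    ultimately show ?thesis by simp
  qed
  have i2: "integral {0..T} (\<lambda>s. exp (- (T - s) / \<epsilon>) *\<^sub>R W s) = exp (- T / \<epsilon>) *\<^sub>R Cw T"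
  proof -
    have "(\<lambda>s. exp (- (T - s) / \<epsilon>) *\<^sub>R W s) = (\<lambda>s. exp (- T / \<epsilon>) *\<^sub>R (exp (s / \<epsilon>) *\<^sub>R W s))"
    proof
      fix s
      have "exp (- (T - s) / \<epsilon>) = exp (- T / \<epsilon>) * exp (s / \<epsilon>)"
        by (simp add: mult_exp_exp diff_divide_distrib)
      then show "exp (- (T - s) / \<epsilon>) *\<^sub>R W s = exp (- T / \<epsilon>) *\<^sub>R (exp (s / \<epsilon>) *\<^sub>R W s)"
        by simp
    qed
    then show ?thesis unfolding Cw_def by (simp only: integral_cmul)
  qed
  show ?thesis unfolding XT \<Xi>_def i1 i2 by (simp add: algebra_simps)
qed




lemma floor_approx_LIMSEQ:
  fixes s :: real
  shows "(\<lambda>k. real_of_int \<lfloor>real (Suc k) * s\<rfloor> / real (Suc k)) \<longlonglongrightarrow> s"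
proof (rule tendsto_sandwich[of "\<lambda>k. s - inverse (real (Suc k))" _ _ "\<lambda>k. s"])
  show "\<forall>\<^sub>F k in sequentially. s - inverse (real (Suc k)) \<le> real_of_int \<lfloor>real (Suc k) * s\<rfloor> / real (Suc k)"
  proof (intro always_eventually allI)
    fix k
    have n: "real (Suc k) > 0" by simp
    have "real (Suc k) * s - 1 \<le> real_of_int \<lfloor>real (Suc k) * s\<rfloor>" by linarith
    then have "(real (Suc k) * s - 1) / real (Suc k) \<le> real_of_int \<lfloor>real (Suc k) * s\<rfloor> / real (Suc k)"
      using n by (intro divide_right_mono) auto
    moreover have "(real (Suc k) * s - 1) / real (Suc k) = s - inverse (real (Suc k))"
      using n by (simp add: field_simps)
    ultimately show "s - inverse (real (Suc k)) \<le> real_of_int \<lfloor>real (Suc k) * s\<rfloor> / real (Suc k)"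
      by simp
  qed
  show "\<forall>\<^sub>F k in sequentially. real_of_int \<lfloor>real (Suc k) * s\<rfloor> / real (Suc k) \<le> s"
  proof (intro always_eventually allI)
    fix k
    have n: "real (Suc k) > 0" by simp
    have "real_of_int \<lfloor>real (Suc k) * s\<rfloor> \<le> real (Suc k) * s" by linarith
    then show "real_of_int \<lfloor>real (Suc k) * s\<rfloor> / real (Suc k) \<le> s"
      using n by (simp add: field_simps)
  qed
  show "(\<lambda>k. s - inverse (real (Suc k))) \<longlonglongrightarrow> s"
    using tendsto_diff[OF tendsto_const LIMSEQ_inverse_real_of_nat, of s] by simp
qed simp

lemma caratheodory_measurable:
  fixes f :: "real \<Rightarrow> 'w \<Rightarrow> 'b::metric_space"
  assumes meas: "\<And>s. s \<ge> 0 \<Longrightarrow> f s \<in> borel_measurable M"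
    and cont: "\<And>\<omega>. \<omega> \<in> space M \<Longrightarrow> continuous_on {0..} (\<lambda>s. f s \<omega>)"
  shows "(\<lambda>z. f (max (fst z) 0) (snd z)) \<in> borel_measurable (lborel \<Otimes>\<^sub>M M)"
proof (rule borel_measurable_LIMSEQ_metric)
  define g where "g k (z::real \<times> 'w) = f (max (real_of_int \<lfloor>real (Suc k) * max (fst z) 0\<rfloor> / real (Suc k)) 0) (snd z)" for k z
  show "(\<lambda>z. g k z) \<in> borel_measurable (lborel \<Otimes>\<^sub>M M)" for k
  proof -
    have "(\<lambda>z. (\<lambda>(i::int) z. f (max (real_of_int i / real (Suc k)) 0) (snd z)) (\<lfloor>real (Suc k) * max (fst z) 0\<rfloor>) z)
        \<in> borel_measurable (lborel \<Otimes>\<^sub>M M)"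
    proof (rule measurable_compose_countable[where f="\<lambda>i z. f (max (real_of_int i / real (Suc k)) 0) (snd z)"])
      fix i :: int
      show "(\<lambda>z. f (max (real_of_int i / real (Suc k)) 0) (snd z)) \<in> borel_measurable (lborel \<Otimes>\<^sub>M M)"
        using measurable_compose[OF measurable_snd meas[of "max (real_of_int i / real (Suc k)) 0"]] by simp
    next
      show "(\<lambda>z. \<lfloor>real (Suc k) * max (fst z) 0\<rfloor>) \<in> measurable (lborel \<Otimes>\<^sub>M M) (count_space UNIV)"
        by measurable
    qed
    then show ?thesis unfolding g_def by simp
  qed
  fix z :: "real \<times> 'w" assume z: "z \<in> space (lborel \<Otimes>\<^sub>M M)"
  then have \<omega>: "snd z \<in> space M" by (auto simp: space_pair_measure)
  let ?s = "max (fst z) 0"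
  have lim: "(\<lambda>k. max (real_of_int \<lfloor>real (Suc k) * ?s\<rfloor> / real (Suc k)) 0) \<longlonglongrightarrow> max ?s 0"
    by (intro tendsto_max floor_approx_LIMSEQ tendsto_const)
  have "(\<lambda>k. f (max (real_of_int \<lfloor>real (Suc k) * ?s\<rfloor> / real (Suc k)) 0) (snd z)) \<longlonglongrightarrow> f (max ?s 0) (snd z)"
    by (rule continuous_on_tendsto_compose[OF cont[OF \<omega>] lim]) auto
  then show "(\<lambda>k. g k z) \<longlonglongrightarrow> f (max (fst z) 0) (snd z)" unfolding g_def by simp
qed




lemma sum_sq_le:
  fixes a :: "'i \<Rightarrow> real"
  assumes I: "finite I"
  shows "(\<Sum>i\<in>I. a i)^2 \<le> real (card I) * (\<Sum>i\<in>I. (a i)^2)"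
proof -
  have "(\<Sum>i\<in>I. a i)^2 = (\<Sum>i\<in>I. \<Sum>j\<in>I. a i * a j)"
    by (simp add: power2_eq_square sum_product)
  also have "\<dots> \<le> (\<Sum>i\<in>I. \<Sum>j\<in>I. ((a i)^2 + (a j)^2) / 2)"
  proof (intro sum_mono)
    fix i j
    have "0 \<le> (a i - a j)^2" by simp
    then show "a i * a j \<le> ((a i)^2 + (a j)^2) / 2" by (simp add: power2_eq_square algebra_simps)
  qed
  also have "\<dots> = ((\<Sum>i\<in>I. \<Sum>j\<in>I. (a i)^2) + (\<Sum>i\<in>I. \<Sum>j\<in>I. (a j)^2)) / 2"
    by (simp only: sum_divide_distrib[symmetric] sum.distrib)
  also have "(\<Sum>i\<in>I. \<Sum>j\<in>I. (a i)^2) = real (card I) * (\<Sum>i\<in>I. (a i)^2)"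
    by (simp add: sum_distrib_left mult.commute)
  also have "(\<Sum>i\<in>I. \<Sum>j\<in>I. (a j)^2) = real (card I) * (\<Sum>i\<in>I. (a i)^2)"
    by simp
  also have "(real (card I) * (\<Sum>i\<in>I. (a i)^2) + real (card I) * (\<Sum>i\<in>I. (a i)^2)) / 2
     = real (card I) * (\<Sum>i\<in>I. (a i)^2)" by simp
  finally show ?thesis .
qed

lemma norm4_le:
  fixes w :: "real^'n"
  shows "norm w ^ 4 \<le> real CARD('n) * (\<Sum>i\<in>UNIV. (w $ i)^4)"
proof -
  have n2: "norm w ^ 2 = (\<Sum>i\<in>UNIV. (w $ i)^2)"
    unfolding power2_norm_eq_inner by (simp add: inner_vec_def power2_eq_square)
  have "norm w ^ 4 = (norm w ^ 2)^2" by simp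
  also have "\<dots> = (\<Sum>i\<in>UNIV. (w $ i)^2)^2" by (simp only: n2)
  also have "\<dots> \<le> real (card (UNIV :: 'n set)) * (\<Sum>i\<in>UNIV. ((w $ i)^2)^2)"
    by (rule sum_sq_le) simp
  finally show ?thesis by simp
qed

lemma BM1_moment4:
  assumes B: "is_BM1 M B" and u: "0 \<le> u"
  shows "(\<integral>\<^sup>+\<omega>. ennreal ((B u \<omega>)^4) \<partial>M) = ennreal (3 * u^2)"
proof (cases "u = 0")
  case True
  have "(\<integral>\<^sup>+\<omega>. ennreal ((B u \<omega>)^4) \<partial>M) = (\<integral>\<^sup>+\<omega>. 0 \<partial>M)"
    using B True unfolding is_BM1_def by (intro nn_integral_cong) auto
  then show ?thesis using True by simp
next
  case False
  then have u0: "0 < u" using u by simp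
  have D: "distributed M lborel (\<lambda>\<omega>. B u \<omega> - B 0 \<omega>) (\<lambda>y. ennreal (normal_density 0 (sqrt (u - 0)) y))"
    using B u0 unfolding is_BM1_def by blast
  have "(\<integral>\<^sup>+\<omega>. ennreal ((B u \<omega>)^4) \<partial>M) = (\<integral>\<^sup>+\<omega>. ennreal ((B u \<omega> - B 0 \<omega>)^4) \<partial>M)"
    using B unfolding is_BM1_def by (intro nn_integral_cong) auto
  also have "\<dots> = (\<integral>\<^sup>+y. ennreal (normal_density 0 (sqrt u) y) * ennreal (y^4) \<partial>lborel)"
    using distributed_nn_integral[OF D, of "\<lambda>y. ennreal (y^4)"] by simp
  also have "\<dots> = (\<integral>\<^sup>+y. ennreal (normal_density 0 (sqrt u) y * (y - 0)^(2*2)) \<partial>lborel)"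
    by (intro nn_integral_cong) (simp add: ennreal_mult'' normal_density_nonneg)
  also have "\<dots> = ennreal (fact (2 * 2) / ((2 / (sqrt u)\<^sup>2)^2 * fact 2))"
  proof -
    have hb: "has_bochner_integral lborel (\<lambda>x. normal_density 0 (sqrt u) x * (x - 0) ^ (2 * 2)) (fact (2 * 2) / ((2 / (sqrt u)\<^sup>2)^2 * fact 2))"
      by (rule normal_moment_even) (use u0 in simp)
    show ?thesis
      using nn_integral_eq_integral[OF integrable.intros[OF hb]]
        has_bochner_integral_integral_eq[OF hb]
      by (simp add: normal_density_nonneg)
  qed
  also have "\<dots> = ennreal (3 * u^2)"
    using u0 by (simp add: fact_numeral power2_eq_square field_simps)
  finally show ?thesis .
qed

lemma W_moment4:
  fixes W :: "real \<Rightarrow> 'w \<Rightarrow> real^'n"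
  assumes W: "is_std_BM M W" and u: "0 \<le> u"
  shows "(\<integral>\<^sup>+\<omega>. ennreal (norm (W u \<omega>) ^ 4) \<partial>M) \<le> ennreal (3 * real CARD('n)^2 * u^2)"
proof -
  have B: "is_BM1 M (\<lambda>t \<omega>. W t \<omega> $ i)" for i using W unfolding is_std_BM_def by blast
  have meas: "(\<lambda>\<omega>. W u \<omega> $ i) \<in> borel_measurable M" for i
    using B[of i] u unfolding is_BM1_def by blast
  have "(\<integral>\<^sup>+\<omega>. ennreal (norm (W u \<omega>) ^ 4) \<partial>M)
      \<le> (\<integral>\<^sup>+\<omega>. ennreal (real CARD('n)) * (\<Sum>i\<in>UNIV. ennreal ((W u \<omega> $ i)^4)) \<partial>M)"
  proof (intro nn_integral_mono)
    fix \<omega>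
    have "ennreal (norm (W u \<omega>) ^ 4) \<le> ennreal (real CARD('n) * (\<Sum>i\<in>UNIV. (W u \<omega> $ i)^4))"
      by (rule ennreal_leI[OF norm4_le])
    also have "\<dots> = ennreal (real CARD('n)) * (\<Sum>i\<in>UNIV. ennreal ((W u \<omega> $ i)^4))"
      by (simp add: ennreal_mult'' sum_nonneg)
    finally show "ennreal (norm (W u \<omega>) ^ 4) \<le> ennreal (real CARD('n)) * (\<Sum>i\<in>UNIV. ennreal ((W u \<omega> $ i)^4))" .
  qed
  also have "\<dots> = ennreal (real CARD('n)) * (\<Sum>i\<in>UNIV. (\<integral>\<^sup>+\<omega>. ennreal ((W u \<omega> $ i)^4) \<partial>M))"
  proof -
    have ms: "(\<lambda>\<omega>. \<Sum>i\<in>UNIV. ennreal ((W u \<omega> $ i)^4)) \<in> borel_measurable M"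
      using meas by measurable
    have "(\<integral>\<^sup>+\<omega>. (\<Sum>i\<in>UNIV. ennreal ((W u \<omega> $ i)^4)) \<partial>M) = (\<Sum>i\<in>UNIV. (\<integral>\<^sup>+\<omega>. ennreal ((W u \<omega> $ i)^4) \<partial>M))"
      by (rule nn_integral_sum) (use meas in measurable)
    then show ?thesis using nn_integral_cmult[OF ms, of "ennreal (real CARD('n))"] by simp
  qed
  also have "\<dots> = ennreal (real CARD('n)) * (\<Sum>i\<in>(UNIV::'n set). ennreal (3 * u^2))"
    using BM1_moment4[OF B u] by simp
  also have "\<dots> = ennreal (3 * real CARD('n)^2 * u^2)"
  proof -
    have u2: "0 \<le> 3 * u^2" by simp
    have "(\<Sum>i\<in>(UNIV::'n set). ennreal (3 * u^2)) = ennreal (real CARD('n)) * ennreal (3 * u^2)"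
      by (simp add: ennreal_of_nat_eq_real_of_nat)
    also have "\<dots> = ennreal (real CARD('n) * (3 * u^2))" by (rule ennreal_mult[symmetric]) (simp_all add: u2)
    finally have "ennreal (real CARD('n)) * (\<Sum>i\<in>(UNIV::'n set). ennreal (3 * u^2))
        = ennreal (real CARD('n)) * ennreal (real CARD('n) * (3 * u^2))" by simp
    also have "\<dots> = ennreal (real CARD('n) * (real CARD('n) * (3 * u^2)))"
      by (rule ennreal_mult[symmetric]) (simp_all add: u2)
    also have "real CARD('n) * (real CARD('n) * (3 * u^2)) = 3 * real CARD('n)^2 * u^2"
      by (simp add: power2_eq_square)
    finally show ?thesis .
  qed
  finally show ?thesis .
qed




lemma smooth_lipschitz:
  fixes b :: "real^'n \<Rightarrow> real \<Rightarrow> real^'n"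
  assumes sm: "smooth_bounded (\<lambda>(y, t). b y t) (UNIV \<times> {0..})"
  obtains L where "L > 0" "\<And>y1 y2 t. t \<ge> 0 \<Longrightarrow> norm (b y1 t - b y2 t) \<le> L * norm (y1 - y2)"
    "continuous_on (UNIV \<times> {0..}) (\<lambda>(y, t). b y t)"
proof -
  let ?S = "UNIV \<times> {0::real..} :: ((real^'n) \<times> real) set"
  let ?f = "\<lambda>(y, t). b y t"
  obtain Df :: "((real^'n) \<times> real) list \<Rightarrow> (real^'n) \<times> real \<Rightarrow> real^'n" where
    D0: "\<forall>z\<in>?S. Df [] z = ?f z" and
    Dd: "\<forall>us. \<forall>z\<in>?S. (Df us has_derivative (\<lambda>h. Df (h # us) z)) (at z within ?S)" and
    Bd: "\<forall>k. \<exists>B. \<forall>us z. length us = k \<longrightarrow> set us \<subseteq> Basis \<longrightarrow> z \<in> ?S \<longrightarrow> norm (Df us z) \<le> B"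
    using sm unfolding smooth_bounded_def by blast
  obtain B1 where B1: "\<And>us z. length us = 1 \<Longrightarrow> set us \<subseteq> Basis \<Longrightarrow> z \<in> ?S \<Longrightarrow> norm (Df us z) \<le> B1"
    using Bd by blast
  define Bc where "Bc = real DIM((real^'n) \<times> real) * max B1 0"
  have fd: "(?f has_derivative (\<lambda>h. Df [h] z)) (at z within ?S)" if z: "z \<in> ?S" for z
  proof (rule has_derivative_transform[OF z])
    show "\<And>x'. x' \<in> ?S \<Longrightarrow> ?f x' = Df [] x'" using D0 by (auto split: prod.splits)
    show "(Df [] has_derivative (\<lambda>h. Df [h] z)) (at z within ?S)" using Dd z by blast
  qed
  have on: "onorm (\<lambda>h. Df [h] z) \<le> Bc" if z: "z \<in> ?S" for z
  proof (rule onorm_le)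
    fix h :: "(real^'n) \<times> real"
    have bl: "bounded_linear (\<lambda>h. Df [h] z)" using fd[OF z] by (rule has_derivative_bounded_linear)
    then have lin: "linear (\<lambda>h. Df [h] z)" by (rule bounded_linear.linear)
    have "Df [h] z = Df [\<Sum>e\<in>Basis. (h \<bullet> e) *\<^sub>R e] z" by (simp add: euclidean_representation)
    also have "\<dots> = (\<Sum>e\<in>Basis. (h \<bullet> e) *\<^sub>R Df [e] z)"
      by (simp only: linear_sum[OF lin, unfolded o_def] linear_scale[OF lin])
    finally have eqh: "Df [h] z = (\<Sum>e\<in>(Basis::((real^'n) \<times> real) set). (h \<bullet> e) *\<^sub>R Df [e] z)" .
    have "norm (Df [h] z) \<le> (\<Sum>e\<in>(Basis::((real^'n) \<times> real) set). norm ((h \<bullet> e) *\<^sub>R Df [e] z))"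
      unfolding eqh by (rule norm_sum)
    also have "\<dots> \<le> (\<Sum>e\<in>(Basis::((real^'n) \<times> real) set). norm h * max B1 0)"
    proof (rule sum_mono)
      fix e :: "(real^'n) \<times> real" assume e: "e \<in> Basis"
      have "\<bar>h \<bullet> e\<bar> \<le> norm h" using Basis_le_norm[OF e] .
      moreover have "norm (Df [e] z) \<le> max B1 0" using B1[of "[e]" z] e z by simp
      ultimately show "norm ((h \<bullet> e) *\<^sub>R Df [e] z) \<le> norm h * max B1 0"
        by (simp add: mult_mono)
    qed
    also have "\<dots> = Bc * norm h" unfolding Bc_def by simp
    finally show "norm (Df [h] z) \<le> Bc * norm h" .
  qed
  have Bc0: "0 \<le> Bc" unfolding Bc_def by simp
  have lip: "norm (b y1 t - b y2 t) \<le> (Bc + 1) * norm (y1 - y2)" if t: "t \<ge> 0" for y1 y2 t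
  proof -
    have cS: "convex ?S" by (intro convex_Times convex_UNIV) (simp add: convex_real_interval)
    have "norm (?f (y1, t) - ?f (y2, t)) \<le> Bc * norm ((y1, t) - (y2, t))"
      by (rule differentiable_bound[OF cS fd on]) (use t in auto)
    also have "norm ((y1, t) - (y2, t)) = norm (y1 - y2)" by (simp add: norm_Pair)
    finally have "norm (b y1 t - b y2 t) \<le> Bc * norm (y1 - y2)" by simp
    also have "\<dots> \<le> (Bc + 1) * norm (y1 - y2)" by (simp add: mult_right_mono)
    finally show ?thesis .
  qed
  have cont: "continuous_on ?S ?f"
    unfolding continuous_on_eq_continuous_within
    using fd has_derivative_continuous by blast
  show ?thesis by (rule that[of "Bc + 1"]) (use Bc0 lip cont in auto)
qed




lemma nn_integral_interval_cont:
  fixes g :: "real \<Rightarrow> real"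
  assumes cg: "continuous_on {a..b} g" and g0: "\<And>u. u \<in> {a..b} \<Longrightarrow> 0 \<le> g u"
  shows "(\<integral>\<^sup>+u. ennreal (indicator {a..b} u * g u) \<partial>lborel) = ennreal (integral {a..b} g)"
proof -
  have m: "(\<lambda>u. indicator {a..b} u * g u) \<in> borel_measurable borel"
    using borel_measurable_continuous_on_indicator[OF _ cg] by simp
  have eqf: "(\<lambda>u. indicator {a..b} u * g u) = (\<lambda>u. if u \<in> {a..b} then g u else 0)"
    by (auto simp: indicator_def)
  have "(g has_integral integral {a..b} g) {a..b}"
    using integrable_continuous_interval[OF cg] by (simp add: has_integral_integral)
  then have hi: "((\<lambda>u. indicator {a..b} u * g u) has_integral integral {a..b} g) UNIV"
    unfolding eqf by (subst has_integral_restrict_UNIV)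
  have nn: "\<And>u. 0 \<le> indicator {a..b} u * g u" using g0 by (auto simp: indicator_def)
  show ?thesis using nn_integral_has_integral_lborel[OF m nn hi] by simp
qed

lemma exp_kernel_integral:
  fixes \<epsilon> s :: real
  assumes \<epsilon>: "\<epsilon> > 0" and s: "0 \<le> s"
  shows "((\<lambda>u. exp (- (s - u) / \<epsilon>)) has_integral (\<epsilon> - \<epsilon> * exp (- s / \<epsilon>))) {0..s}"
proof -
  have "((\<lambda>u. exp (- (s - u) / \<epsilon>)) has_integral ((\<lambda>u. \<epsilon> * exp (- (s - u) / \<epsilon>)) s - (\<lambda>u. \<epsilon> * exp (- (s - u) / \<epsilon>)) 0)) {0..s}"
  proof (rule fundamental_theorem_of_calculus[OF s])
    fix x assume "x \<in> {0..s}"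
    have "((\<lambda>u. \<epsilon> * exp (- (s - u) / \<epsilon>)) has_real_derivative (\<epsilon> * (exp (- (s - x) / \<epsilon>) * (1 / \<epsilon>)))) (at x within {0..s})"
      using \<epsilon> by (auto intro!: derivative_eq_intros simp: field_simps)
    then show "((\<lambda>u. \<epsilon> * exp (- (s - u) / \<epsilon>)) has_vector_derivative exp (- (s - x) / \<epsilon>)) (at x within {0..s})"
      unfolding has_real_derivative_iff_has_vector_derivative[symmetric] using \<epsilon> by simp
  qed
  then show ?thesis by simp
qed

lemma std_BM_facts:
  fixes W :: "real \<Rightarrow> 'w \<Rightarrow> real^'n"
  assumes W: "is_std_BM M W"
  shows "prob_space M"
    and "\<And>\<omega>. \<omega> \<in> space M \<Longrightarrow> continuous_on {0..} (\<lambda>t. W t \<omega>)"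
    and "\<And>t. 0 \<le> t \<Longrightarrow> (\<lambda>\<omega>. norm (W t \<omega>)) \<in> borel_measurable M"
    and "\<And>\<omega>. \<omega> \<in> space M \<Longrightarrow> W 0 \<omega> = 0"
proof -
  have B: "is_BM1 M (\<lambda>t \<omega>. W t \<omega> $ i)" for i using W unfolding is_std_BM_def by blast
  show "prob_space M" using W unfolding is_std_BM_def by blast
  show "continuous_on {0..} (\<lambda>t. W t \<omega>)" if \<omega>: "\<omega> \<in> space M" for \<omega>
  proof -
    have "continuous_on {0..} (\<lambda>t. \<chi> i. W t \<omega> $ i)"
      using B \<omega> unfolding is_BM1_def by (intro continuous_on_vec_lambda) blast
    then show ?thesis by simp
  qed
  show "(\<lambda>\<omega>. norm (W t \<omega>)) \<in> borel_measurable M" if t: "0 \<le> t" for t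
  proof -
    have [measurable]: "(\<lambda>\<omega>. W t \<omega> $ i) \<in> borel_measurable M" for i
      using B[of i] t unfolding is_BM1_def by blast
    have "(\<lambda>\<omega>. norm (W t \<omega>)) = (\<lambda>\<omega>. sqrt (\<Sum>i\<in>UNIV. (W t \<omega> $ i)^2))"
      by (simp add: norm_vec_def L2_set_def)
    also have "\<dots> \<in> borel_measurable M" by measurable
    finally show ?thesis .
  qed
  show "W 0 \<omega> = 0" if \<omega>: "\<omega> \<in> space M" for \<omega>
    using B \<omega> unfolding is_BM1_def by (simp add: vec_eq_iff)
qed




lemma q_facts:
  fixes W :: "real \<Rightarrow> 'w \<Rightarrow> real^'n" and \<epsilon> :: real
  assumes W: "is_std_BM M W" and \<epsilon>: "\<epsilon> > 0"
  defines "q \<equiv> \<lambda>s \<omega>. \<integral>\<^sup>+u. ennreal (indicator {0..s} u * exp (- (s - u) / \<epsilon>) * norm (W (max u 0) \<omega>)) \<partial>lborel"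
  shows "(\<lambda>z. q (fst z) (snd z)) \<in> borel_measurable (lborel \<Otimes>\<^sub>M M)"
    and "\<And>s \<omega>. \<omega> \<in> space M \<Longrightarrow> 0 \<le> s \<Longrightarrow> q s \<omega> = ennreal (integral {0..s} (\<lambda>u. exp (- (s - u) / \<epsilon>) * norm (W u \<omega>)))"
    and "\<And>s. 0 \<le> s \<Longrightarrow> (\<integral>\<^sup>+\<omega>. q s \<omega> ^ 4 \<partial>M) \<le> ennreal (3 * real CARD('n)^2 * \<epsilon>^4 * s^2)"
proof -
  note F = std_BM_facts[OF W]
  interpret P: prob_space M by (rule F(1))
  interpret PS: pair_sigma_finite lborel M
    unfolding pair_sigma_finite_def using prob_space_imp_sigma_finite[OF F(1)] sigma_finite_lborel by auto
  have car: "(\<lambda>z. norm (W (max (fst z) 0) (snd z))) \<in> borel_measurable (lborel \<Otimes>\<^sub>M M)"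
    using caratheodory_measurable[of "\<lambda>s \<omega>. norm (W s \<omega>)" M] F(2,3) continuous_on_norm by blast
  have car4: "(\<lambda>z. norm (W (max (fst z) 0) (snd z)) ^ 4) \<in> borel_measurable (lborel \<Otimes>\<^sub>M M)"
    using car by measurable
  show qm: "(\<lambda>z. q (fst z) (snd z)) \<in> borel_measurable (lborel \<Otimes>\<^sub>M M)"
  proof -
    have nm: "(\<lambda>p::(real \<times> 'w) \<times> real. norm (W (max (snd p) 0) (snd (fst p)))) \<in> borel_measurable ((lborel \<Otimes>\<^sub>M M) \<Otimes>\<^sub>M lborel)"
    proof -
      have "(\<lambda>p::(real \<times> 'w) \<times> real. (snd p, snd (fst p))) \<in> measurable ((lborel \<Otimes>\<^sub>M M) \<Otimes>\<^sub>M lborel) (lborel \<Otimes>\<^sub>M M)"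
        by measurable
      from measurable_compose[OF this car] show ?thesis by simp
    qed
    have ind: "(\<lambda>p::(real \<times> 'w) \<times> real. indicator {0..fst (fst p)} (snd p) :: real) \<in> borel_measurable ((lborel \<Otimes>\<^sub>M M) \<Otimes>\<^sub>M lborel)"
    proof -
      have "(\<lambda>p::(real \<times> 'w) \<times> real. indicator {0..fst (fst p)} (snd p) :: real) = (\<lambda>p. if 0 \<le> snd p \<and> snd p \<le> fst (fst p) then 1 else 0)"
        by (auto simp: indicator_def fun_eq_iff)
      also have "\<dots> \<in> borel_measurable ((lborel \<Otimes>\<^sub>M M) \<Otimes>\<^sub>M lborel)" by measurable
      finally show ?thesis .
    qed
    have m3: "case_prod (\<lambda>z u. ennreal (indicator {0..fst z} u * exp (- (fst z - u) / \<epsilon>) * norm (W (max u 0) (snd z))))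
        \<in> borel_measurable ((lborel \<Otimes>\<^sub>M M) \<Otimes>\<^sub>M lborel)"
      using ind nm by (simp add: case_prod_beta') measurable
    from lborel.borel_measurable_nn_integral[OF m3] show ?thesis unfolding q_def by simp
  qed
  have qeq: "q s \<omega> = ennreal (integral {0..s} (\<lambda>u. exp (- (s - u) / \<epsilon>) * norm (W u \<omega>)))"
    if \<omega>: "\<omega> \<in> space M" and s: "0 \<le> s" for s \<omega>
  proof -
    have "q s \<omega> = (\<integral>\<^sup>+u. ennreal (indicator {0..s} u * (exp (- (s - u) / \<epsilon>) * norm (W u \<omega>))) \<partial>lborel)"
      unfolding q_def by (intro nn_integral_cong) (auto simp: indicator_def max_def)
    also have "\<dots> = ennreal (integral {0..s} (\<lambda>u. exp (- (s - u) / \<epsilon>) * norm (W u \<omega>)))"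
    proof (rule nn_integral_interval_cont)
      have "continuous_on {0..s} (\<lambda>u. W u \<omega>)" using F(2)[OF \<omega>] by (rule continuous_on_subset) auto
      then show "continuous_on {0..s} (\<lambda>u. exp (- (s - u) / \<epsilon>) * norm (W u \<omega>))"
        using \<epsilon> by (intro continuous_intros) auto
    qed simp
    finally show ?thesis .
  qed
  then show "\<And>s \<omega>. \<omega> \<in> space M \<Longrightarrow> 0 \<le> s \<Longrightarrow> q s \<omega> = ennreal (integral {0..s} (\<lambda>u. exp (- (s - u) / \<epsilon>) * norm (W u \<omega>)))" .
  fix s :: real assume s: "0 \<le> s"
  show "(\<integral>\<^sup>+\<omega>. q s \<omega> ^ 4 \<partial>M) \<le> ennreal (3 * real CARD('n)^2 * \<epsilon>^4 * s^2)"
  proof (cases "s = 0")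
    case True
    have "(\<integral>\<^sup>+\<omega>. q s \<omega> ^ 4 \<partial>M) = (\<integral>\<^sup>+\<omega>. 0 \<partial>M)"
      by (intro nn_integral_cong) (simp add: qeq True)
    then show ?thesis by simp
  next
    case False
    then have s0: "0 < s" using s by simp
    define k where "k u = exp (- (s - u) / \<epsilon>)" for u
    define K where "K = \<epsilon> - \<epsilon> * exp (- s / \<epsilon>)"
    have hk: "(k has_integral K) {0..s}" unfolding k_def K_def by (rule exp_kernel_integral[OF \<epsilon> s])
    have K0: "0 < K" using \<epsilon> s0 unfolding K_def by (simp add: mult_less_cancel_left_pos)
    have Ke: "K \<le> \<epsilon>" using \<epsilon> unfolding K_def by simp
    have ck: "continuous_on {0..s} k" unfolding k_def using \<epsilon> by (intro continuous_intros) auto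
    have k0: "0 \<le> k u" for u unfolding k_def by simp
    define h where "h u \<omega> = ennreal (indicator {0..s} u * k u * norm (W (max u 0) \<omega>) ^ 4)" for u \<omega>
    have hm: "(\<lambda>z. h (fst z) (snd z)) \<in> borel_measurable (lborel \<Otimes>\<^sub>M M)"
    proof -
      have [measurable]: "(\<lambda>z::real \<times> 'w. k (fst z)) \<in> borel_measurable (lborel \<Otimes>\<^sub>M M)"
        unfolding k_def by measurable
      note car[measurable]
      show ?thesis unfolding h_def by measurable
    qed
    have pw: "q s \<omega> ^ 4 \<le> ennreal (\<epsilon>^3) * (\<integral>\<^sup>+u. h u \<omega> \<partial>lborel)" if \<omega>: "\<omega> \<in> space M" for \<omega>
    proof -
      have cW: "continuous_on {0..s} (\<lambda>u. W u \<omega>)" using F(2)[OF \<omega>] by (rule continuous_on_subset) auto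
      have cg: "continuous_on {0..s} (\<lambda>u. norm (W u \<omega>))" using cW by (intro continuous_intros)
      have i1: "(\<lambda>u. k u * norm (W u \<omega>)) integrable_on {0..s}"
        using ck cg cW by (intro integrable_continuous_interval continuous_intros)
      have i2: "(\<lambda>u. k u * norm (W u \<omega>) ^ 4) integrable_on {0..s}"
        using ck cg cW by (intro integrable_continuous_interval continuous_intros)
      have IK: "integral {0..s} k = K" using hk by (rule integral_unique)
      have J: "(integral {0..s} (\<lambda>u. k u * norm (W u \<omega>)))^4 \<le> K^3 * integral {0..s} (\<lambda>u. k u * norm (W u \<omega>) ^ 4)"
        using jensen4_integral[of "{0..s}" k "\<lambda>u. norm (W u \<omega>)"] k0 hk i1 i2 K0 IK
        by (auto simp: has_integral_integrable)
      have I4: "0 \<le> integral {0..s} (\<lambda>u. k u * norm (W u \<omega>) ^ 4)"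
        using i2 k0 by (intro integral_nonneg) auto
      have "K^3 \<le> \<epsilon>^3" using K0 Ke by (intro power_mono) auto
      then have J2: "(integral {0..s} (\<lambda>u. k u * norm (W u \<omega>)))^4 \<le> \<epsilon>^3 * integral {0..s} (\<lambda>u. k u * norm (W u \<omega>) ^ 4)"
        using J I4 by (meson mult_right_mono order_trans)
      have "q s \<omega> ^ 4 = ennreal ((integral {0..s} (\<lambda>u. k u * norm (W u \<omega>)))^4)"
      proof -
        have Inn: "0 \<le> integral {0..s} (\<lambda>u. k u * norm (W u \<omega>))"
          using i1 k0 by (intro integral_nonneg) auto
        have "q s \<omega> = ennreal (integral {0..s} (\<lambda>u. k u * norm (W u \<omega>)))"
          unfolding qeq[OF \<omega> s] k_def ..
        then show ?thesis using ennreal_power[OF Inn, of 4] by simp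
      qed
      also have "\<dots> \<le> ennreal (\<epsilon>^3 * integral {0..s} (\<lambda>u. k u * norm (W u \<omega>) ^ 4))"
        by (rule ennreal_leI[OF J2])
      also have "\<dots> = ennreal (\<epsilon>^3) * ennreal (integral {0..s} (\<lambda>u. k u * norm (W u \<omega>) ^ 4))"
        using \<epsilon> I4 by (intro ennreal_mult) auto
      also have "ennreal (integral {0..s} (\<lambda>u. k u * norm (W u \<omega>) ^ 4)) = (\<integral>\<^sup>+u. h u \<omega> \<partial>lborel)"
      proof -
        have "(\<integral>\<^sup>+u. h u \<omega> \<partial>lborel) = (\<integral>\<^sup>+u. ennreal (indicator {0..s} u * (k u * norm (W u \<omega>) ^ 4)) \<partial>lborel)"
          unfolding h_def by (intro nn_integral_cong) (auto simp: indicator_def max_def)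
        also have "\<dots> = ennreal (integral {0..s} (\<lambda>u. k u * norm (W u \<omega>) ^ 4))"
          by (rule nn_integral_interval_cont) (use ck cg cW k0 in \<open>auto intro!: continuous_intros\<close>)
        finally show ?thesis by simp
      qed
      finally show ?thesis .
    qed
    have "(\<integral>\<^sup>+\<omega>. (\<integral>\<^sup>+u. h u \<omega> \<partial>lborel) \<partial>M) = (\<integral>\<^sup>+u. (\<integral>\<^sup>+\<omega>. h u \<omega> \<partial>M) \<partial>lborel)"
      using PS.Fubini'[of h] hm by (simp add: case_prod_beta')
    also have "\<dots> \<le> (\<integral>\<^sup>+u. ennreal (indicator {0..s} u * k u) * ennreal (3 * real CARD('n)^2 * s^2) \<partial>lborel)"
    proof (intro nn_integral_mono)
      fix u :: real
      have "(\<integral>\<^sup>+\<omega>. h u \<omega> \<partial>M) = (\<integral>\<^sup>+\<omega>. ennreal (indicator {0..s} u * k u) * ennreal (norm (W (max u 0) \<omega>) ^ 4) \<partial>M)"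
        unfolding h_def using k0 by (intro nn_integral_cong) (simp add: ennreal_mult)
      also have "\<dots> = ennreal (indicator {0..s} u * k u) * (\<integral>\<^sup>+\<omega>. ennreal (norm (W (max u 0) \<omega>) ^ 4) \<partial>M)"
        by (rule nn_integral_cmult) (use F(3)[of "max u 0"] in measurable)
      also have "\<dots> \<le> ennreal (indicator {0..s} u * k u) * ennreal (3 * real CARD('n)^2 * s^2)"
      proof (cases "u \<in> {0..s}")
        case True
        have "(\<integral>\<^sup>+\<omega>. ennreal (norm (W (max u 0) \<omega>) ^ 4) \<partial>M) \<le> ennreal (3 * real CARD('n)^2 * (max u 0)^2)"
          by (rule W_moment4[OF W]) simp
        also have "\<dots> \<le> ennreal (3 * real CARD('n)^2 * s^2)"
          using True by (intro ennreal_leI mult_left_mono power_mono) auto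
        finally show ?thesis by (rule mult_left_mono) simp
      qed simp
      finally show "(\<integral>\<^sup>+\<omega>. h u \<omega> \<partial>M) \<le> ennreal (indicator {0..s} u * k u) * ennreal (3 * real CARD('n)^2 * s^2)" .
    qed
    also have "\<dots> = ennreal (3 * real CARD('n)^2 * s^2) * (\<integral>\<^sup>+u. ennreal (indicator {0..s} u * k u) \<partial>lborel)"
    proof -
      have m: "(\<lambda>u. ennreal (indicator {0..s} u * k u)) \<in> borel_measurable lborel" unfolding k_def by measurable
      show ?thesis using nn_integral_multc[OF m, of "ennreal (3 * real CARD('n)^2 * s^2)"] by (simp add: mult.commute)
    qed
    also have "(\<integral>\<^sup>+u. ennreal (indicator {0..s} u * k u) \<partial>lborel) = ennreal K"
      using nn_integral_interval_cont[OF ck] k0 integral_unique[OF hk] by simp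
    finally have inner: "(\<integral>\<^sup>+\<omega>. (\<integral>\<^sup>+u. h u \<omega> \<partial>lborel) \<partial>M) \<le> ennreal (3 * real CARD('n)^2 * s^2) * ennreal K" .
    have "(\<integral>\<^sup>+\<omega>. q s \<omega> ^ 4 \<partial>M) \<le> (\<integral>\<^sup>+\<omega>. ennreal (\<epsilon>^3) * (\<integral>\<^sup>+u. h u \<omega> \<partial>lborel) \<partial>M)"
      using pw by (intro nn_integral_mono) auto
    also have "\<dots> = ennreal (\<epsilon>^3) * (\<integral>\<^sup>+\<omega>. (\<integral>\<^sup>+u. h u \<omega> \<partial>lborel) \<partial>M)"
    proof (rule nn_integral_cmult)
      have "case_prod (\<lambda>\<omega> u. h u \<omega>) \<in> borel_measurable (M \<Otimes>\<^sub>M lborel)"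
        using measurable_compose[OF measurable_pair_swap' hm] by (simp add: case_prod_beta')
      then show "(\<lambda>\<omega>. \<integral>\<^sup>+u. h u \<omega> \<partial>lborel) \<in> borel_measurable M"
        by (rule lborel.borel_measurable_nn_integral)
    qed
    also have "\<dots> \<le> ennreal (\<epsilon>^3) * (ennreal (3 * real CARD('n)^2 * s^2) * ennreal K)"
      by (rule mult_left_mono[OF inner]) simp
    also have "\<dots> = ennreal (\<epsilon>^3 * (3 * real CARD('n)^2 * s^2 * K))"
      using \<epsilon> K0 by (simp add: ennreal_mult)
    also have "\<dots> \<le> ennreal (\<epsilon>^3 * (3 * real CARD('n)^2 * s^2 * \<epsilon>))"
      using Ke \<epsilon> by (intro ennreal_leI mult_left_mono) auto
    also have "\<epsilon>^3 * (3 * real CARD('n)^2 * s^2 * \<epsilon>) = 3 * real CARD('n)^2 * \<epsilon>^4 * s^2"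
      by (simp add: power_numeral_reduce)
    finally show ?thesis .
  qed
qed




lemma pow4_add2: "((a::real) + b)^4 \<le> 8 * (a^4 + b^4)"
proof -
  define c where "c = (a + b) / 2"
  have s: "a - c + (b - c) = 0" unfolding c_def by simp
  have "c^4 + 4*c^3*(a-c) + (c^4 + 4*c^3*(b-c)) \<le> a^4 + b^4"
    using tangent4[of c a] tangent4[of c b] by linarith
  moreover have "4*c^3*(a-c) + 4*c^3*(b-c) = 4*c^3*(a - c + (b - c))" by (simp add: algebra_simps)
  ultimately have "2 * c^4 \<le> a^4 + b^4" using s by simp
  moreover have "(a + b)^4 = 16 * c^4" unfolding c_def by (simp add: power_divide)
  ultimately show ?thesis by simp
qed

lemma rho_cont:
  fixes g :: "real \<Rightarrow> real" and \<epsilon> t :: real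
  assumes \<epsilon>: "\<epsilon> > 0" and cg: "continuous_on {0..t} g"
  shows "continuous_on {0..t} (\<lambda>s. integral {0..s} (\<lambda>u. exp (- (s - u) / \<epsilon>) * g u))"
proof -
  have eq: "integral {0..s} (\<lambda>u. exp (- (s - u) / \<epsilon>) * g u) = exp (- s / \<epsilon>) * integral {0..s} (\<lambda>u. exp (u / \<epsilon>) * g u)" for s
  proof -
    have "(\<lambda>u. exp (- (s - u) / \<epsilon>) * g u) = (\<lambda>u. exp (- s / \<epsilon>) * (exp (u / \<epsilon>) * g u))"
    proof
      fix u
      have "exp (- (s - u) / \<epsilon>) = exp (- s / \<epsilon>) * exp (u / \<epsilon>)"
        by (simp add: mult_exp_exp diff_divide_distrib)
      then show "exp (- (s - u) / \<epsilon>) * g u = exp (- s / \<epsilon>) * (exp (u / \<epsilon>) * g u)" by simp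
    qed
    then show ?thesis by (simp only: integral_mult_right)
  qed
  have ci: "continuous_on {0..t} (\<lambda>s. integral {0..s} (\<lambda>u. exp (u / \<epsilon>) * g u))"
    by (rule indefinite_integral_continuous_1, rule integrable_continuous_interval)
       (use \<epsilon> cg in \<open>auto intro!: continuous_intros\<close>)
  show ?thesis unfolding eq using \<epsilon> ci by (auto intro!: continuous_intros)
qed

lemma pair_pathwise:
  fixes b :: "real^'n \<Rightarrow> real \<Rightarrow> real^'n" and Xa Xb Wa Wb :: "real \<Rightarrow> real^'n"
    and \<epsilon> L t c :: real and w va vb x :: "real^'n"
  assumes \<epsilon>: "\<epsilon> > 0" and L: "L > 0" and t: "0 \<le> t" and c: "0 \<le> c"
    and lip: "\<And>y1 y2 s. s \<ge> 0 \<Longrightarrow> norm (b y1 s - b y2 s) \<le> L * norm (y1 - y2)"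
    and cb: "continuous_on (UNIV \<times> {0..}) (\<lambda>(y, s). b y s)"
    and cXa: "continuous_on {0..} Xa" and cXb: "continuous_on {0..} Xb"
    and cWa: "continuous_on {0..} Wa" and cWb: "continuous_on {0..} Wb"
    and hXa: "\<And>s. 0 \<le> s \<Longrightarrow> Xa s = x + (\<epsilon> * (1 - exp (- s / \<epsilon>))) *\<^sub>R va
       + integral {0..s} (\<lambda>u. (1 - exp (- (s - u) / \<epsilon>)) *\<^sub>R b (Xa u) u)
       + c *\<^sub>R integral {0..s} (\<lambda>u. exp (- (s - u) / \<epsilon>) *\<^sub>R Wa u)"
    and hXb: "\<And>s. 0 \<le> s \<Longrightarrow> Xb s = x + (\<epsilon> * (1 - exp (- s / \<epsilon>))) *\<^sub>R vb
       + integral {0..s} (\<lambda>u. (1 - exp (- (s - u) / \<epsilon>)) *\<^sub>R b (Xb u) u)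
       + c *\<^sub>R integral {0..s} (\<lambda>u. exp (- (s - u) / \<epsilon>) *\<^sub>R Wb u)"
  defines "Ra \<equiv> \<lambda>s. \<epsilon> * norm (va - w) + c * integral {0..s} (\<lambda>u. exp (- (s - u) / \<epsilon>) * norm (Wa u))"
    and "Rb \<equiv> \<lambda>s. \<epsilon> * norm (vb - w) + c * integral {0..s} (\<lambda>u. exp (- (s - u) / \<epsilon>) * norm (Wb u))"
  shows "norm (Xa t - Xb t) ^ 4 \<le> 64 * (Ra t ^ 4 + Rb t ^ 4)
      + 64 * L^4 * exp (4 * L * t) * t^3 * integral {0..t} (\<lambda>s. Ra s ^ 4 + Rb s ^ 4)"
proof -
  have cbeta: "continuous_on {0..} (\<lambda>u. b (X u) u)" if cX: "continuous_on {0..} X" for X :: "real \<Rightarrow> real^'n"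
  proof -
    have "continuous_on {0..} (\<lambda>u. (\<lambda>(y, s). b y s) (X u, u))"
      by (rule continuous_on_compose2[OF cb]) (use cX in \<open>auto intro!: continuous_intros\<close>)
    then show ?thesis by simp
  qed
  have cba: "continuous_on {0..} (\<lambda>u. b (Xa u) u)" by (rule cbeta[OF cXa])
  have cbb: "continuous_on {0..} (\<lambda>u. b (Xb u) u)" by (rule cbeta[OF cXb])
  define u where "u s = norm (Xa s - Xb s)" for s
  define r where "r s = Ra s + Rb s" for s
  have sub: "{0..s} \<subseteq> {0::real..}" for s by auto
  have cu: "continuous_on {0..t} u" unfolding u_def
    using continuous_on_subset[OF cXa sub] continuous_on_subset[OF cXb sub] by (intro continuous_intros) auto
  have cWna: "continuous_on {0..t} (\<lambda>u. norm (Wa u))" using continuous_on_subset[OF cWa sub] by (intro continuous_intros)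
  have cWnb: "continuous_on {0..t} (\<lambda>u. norm (Wb u))" using continuous_on_subset[OF cWb sub] by (intro continuous_intros)
  have cRa: "continuous_on {0..t} Ra" unfolding Ra_def using rho_cont[OF \<epsilon> cWna] by (intro continuous_intros)
  have cRb: "continuous_on {0..t} Rb" unfolding Rb_def using rho_cont[OF \<epsilon> cWnb] by (intro continuous_intros)
  have cr: "continuous_on {0..t} r" unfolding r_def using cRa cRb by (intro continuous_intros)
  have rho_nn: "0 \<le> integral {0..s} (\<lambda>u. exp (- (s - u) / \<epsilon>) * norm (W u))"
    if cW: "continuous_on {0..} W" for s and W :: "real \<Rightarrow> real^'n"
  proof (rule integral_nonneg)
    show "(\<lambda>u. exp (- (s - u) / \<epsilon>) * norm (W u)) integrable_on {0..s}"
      using continuous_on_subset[OF cW sub] \<epsilon> by (intro integrable_continuous_interval continuous_intros) auto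
  qed simp
  have Ra0: "0 \<le> Ra s" for s unfolding Ra_def using rho_nn[OF cWa] \<epsilon> c by simp
  have Rb0: "0 \<le> Rb s" for s unfolding Rb_def using rho_nn[OF cWb] \<epsilon> c by simp
  have r0: "0 \<le> r s" for s unfolding r_def using Ra0 Rb0 by simp
  have Qb: "norm (integral {0..s} (\<lambda>u. exp (- (s - u) / \<epsilon>) *\<^sub>R W u)) \<le> integral {0..s} (\<lambda>u. exp (- (s - u) / \<epsilon>) * norm (W u))"
    if cW: "continuous_on {0..} W" for s and W :: "real \<Rightarrow> real^'n"
  proof (rule integral_norm_bound_integral)
    show "(\<lambda>u. exp (- (s - u) / \<epsilon>) *\<^sub>R W u) integrable_on {0..s}"
      using continuous_on_subset[OF cW sub] \<epsilon> by (intro integrable_continuous_interval continuous_intros) auto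
    show "(\<lambda>u. exp (- (s - u) / \<epsilon>) * norm (W u)) integrable_on {0..s}"
      using continuous_on_subset[OF cW sub] \<epsilon> by (intro integrable_continuous_interval continuous_intros) auto
  qed simp
  have key: "u s \<le> r s + L * integral {0..s} u" if s: "s \<in> {0..t}" for s
  proof -
    have s0: "0 \<le> s" using s by simp
    define Ia where "Ia = integral {0..s} (\<lambda>u. (1 - exp (- (s - u) / \<epsilon>)) *\<^sub>R b (Xa u) u)"
    define Ib where "Ib = integral {0..s} (\<lambda>u. (1 - exp (- (s - u) / \<epsilon>)) *\<^sub>R b (Xb u) u)"
    define Qa where "Qa = integral {0..s} (\<lambda>u. exp (- (s - u) / \<epsilon>) *\<^sub>R Wa u)"
    define Qb' where "Qb' = integral {0..s} (\<lambda>u. exp (- (s - u) / \<epsilon>) *\<^sub>R Wb u)"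
    define e where "e = \<epsilon> * (1 - exp (- s / \<epsilon>))"
    have D: "Xa s - Xb s = e *\<^sub>R (va - vb) + (Ia - Ib) + c *\<^sub>R (Qa - Qb')"
      unfolding hXa[OF s0] hXb[OF s0] Ia_def Ib_def Qa_def Qb'_def e_def by (simp add: algebra_simps)
    have e0: "0 \<le> e" "e \<le> \<epsilon>" unfolding e_def using \<epsilon> s0 by (auto simp: mult_le_cancel_left1)
    have ia: "(\<lambda>u. (1 - exp (- (s - u) / \<epsilon>)) *\<^sub>R b (Xa u) u) integrable_on {0..s}"
      using continuous_on_subset[OF cba sub] \<epsilon> by (intro integrable_continuous_interval continuous_intros) auto
    have ib: "(\<lambda>u. (1 - exp (- (s - u) / \<epsilon>)) *\<^sub>R b (Xb u) u) integrable_on {0..s}"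
      using continuous_on_subset[OF cbb sub] \<epsilon> by (intro integrable_continuous_interval continuous_intros) auto
    have cus: "continuous_on {0..s} u" using cu by (rule continuous_on_subset) (use s in auto)
    have Iab: "norm (Ia - Ib) \<le> L * integral {0..s} u"
    proof -
      have "Ia - Ib = integral {0..s} (\<lambda>u. (1 - exp (- (s - u) / \<epsilon>)) *\<^sub>R b (Xa u) u - (1 - exp (- (s - u) / \<epsilon>)) *\<^sub>R b (Xb u) u)"
        unfolding Ia_def Ib_def by (rule integral_diff[OF ia ib, symmetric])
      also have "norm \<dots> \<le> integral {0..s} (\<lambda>v. L * u v)"
      proof (rule integral_norm_bound_integral)
        show "(\<lambda>v. (1 - exp (- (s - v) / \<epsilon>)) *\<^sub>R b (Xa v) v - (1 - exp (- (s - v) / \<epsilon>)) *\<^sub>R b (Xb v) v) integrable_on {0..s}"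
          using ia ib by (rule integrable_diff)
        show "(\<lambda>v. L * u v) integrable_on {0..s}"
          using cus by (intro integrable_continuous_interval continuous_intros)
        fix v assume v: "v \<in> {0..s}"
        have k1: "\<bar>1 - exp (- (s - v) / \<epsilon>)\<bar> \<le> 1"
        proof -
          have a: "- (s - v) / \<epsilon> \<le> 0" using v \<epsilon> by (simp add: divide_nonpos_pos)
          have "exp (- (s - v) / \<epsilon>) \<le> 1" using a by simp
          moreover have "0 < exp (- (s - v) / \<epsilon>)" by simp
          ultimately show ?thesis by (simp add: abs_of_nonneg)
        qed
        have "norm ((1 - exp (- (s - v) / \<epsilon>)) *\<^sub>R b (Xa v) v - (1 - exp (- (s - v) / \<epsilon>)) *\<^sub>R b (Xb v) v)
            = \<bar>1 - exp (- (s - v) / \<epsilon>)\<bar> * norm (b (Xa v) v - b (Xb v) v)"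
          by (simp add: scaleR_diff_right[symmetric])
        also have "\<dots> \<le> 1 * (L * norm (Xa v - Xb v))"
          using k1 lip[of v "Xa v" "Xb v"] v by (intro mult_mono) auto
        finally show "norm ((1 - exp (- (s - v) / \<epsilon>)) *\<^sub>R b (Xa v) v - (1 - exp (- (s - v) / \<epsilon>)) *\<^sub>R b (Xb v) v) \<le> L * u v"
          unfolding u_def by simp
      qed
      also have "\<dots> = L * integral {0..s} u" by simp
      finally show ?thesis .
    qed
    have "u s \<le> norm (e *\<^sub>R (va - vb)) + norm (Ia - Ib) + norm (c *\<^sub>R (Qa - Qb'))"
      unfolding u_def D by (meson norm_triangle_ineq order_trans add_mono order_refl)
    also have "norm (e *\<^sub>R (va - vb)) \<le> \<epsilon> * (norm (va - w) + norm (vb - w))"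
    proof -
      have "norm (va - vb) = norm ((va - w) - (vb - w))" by simp
      also have "\<dots> \<le> norm (va - w) + norm (vb - w)" by (rule norm_triangle_ineq4)
      finally have "norm (va - vb) \<le> norm (va - w) + norm (vb - w)" .
      then show ?thesis using e0 by (simp add: mult_mono)
    qed
    also have "norm (c *\<^sub>R (Qa - Qb')) \<le> c * (integral {0..s} (\<lambda>u. exp (- (s - u) / \<epsilon>) * norm (Wa u))
        + integral {0..s} (\<lambda>u. exp (- (s - u) / \<epsilon>) * norm (Wb u)))"
    proof -
      have "norm (Qa - Qb') \<le> norm Qa + norm Qb'" by (rule norm_triangle_ineq4)
      also have "\<dots> \<le> integral {0..s} (\<lambda>u. exp (- (s - u) / \<epsilon>) * norm (Wa u)) + integral {0..s} (\<lambda>u. exp (- (s - u) / \<epsilon>) * norm (Wb u))"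
        unfolding Qa_def Qb'_def by (intro add_mono Qb cWa cWb)
      finally show ?thesis using c by (simp add: mult_left_mono)
    qed
    finally show ?thesis using Iab unfolding r_def Ra_def Rb_def by (simp add: algebra_simps)
  qed
  have G: "u t \<le> r t + L * exp (L * t) * integral {0..t} r"
    by (rule gronwall_simple[OF _ t cu cr r0 key]) (use L in auto)
  have ir: "r integrable_on {0..t}" by (rule integrable_continuous_interval[OF cr])
  have ir4: "(\<lambda>s. r s ^ 4) integrable_on {0..t}" using cr by (intro integrable_continuous_interval continuous_intros)
  have iR4: "(\<lambda>s. Ra s ^ 4 + Rb s ^ 4) integrable_on {0..t}" using cRa cRb by (intro integrable_continuous_interval continuous_intros)
  have Ir0: "0 \<le> integral {0..t} r" using ir r0 by (intro integral_nonneg) auto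
  have J: "(integral {0..t} r)^4 \<le> t^3 * integral {0..t} (\<lambda>s. r s ^ 4)"
  proof (cases "t = 0")
    case True then show ?thesis by simp
  next
    case False
    then have t0: "0 < t" using t by simp
    have "(integral {0..t} (\<lambda>s. 1 * r s))^4 \<le> (integral {0..t} (\<lambda>s. 1::real))^3 * integral {0..t} (\<lambda>s. 1 * r s ^ 4)"
      by (rule jensen4_integral) (use ir ir4 t0 in auto)
    then show ?thesis using t by simp
  qed
  have r4: "r s ^ 4 \<le> 8 * (Ra s ^ 4 + Rb s ^ 4)" for s unfolding r_def by (rule pow4_add2)
  have Ir4: "integral {0..t} (\<lambda>s. r s ^ 4) \<le> 8 * integral {0..t} (\<lambda>s. Ra s ^ 4 + Rb s ^ 4)"
  proof -
    have i8: "(\<lambda>s. 8 * (Ra s ^ 4 + Rb s ^ 4)) integrable_on {0..t}"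
      using cRa cRb by (intro integrable_continuous_interval continuous_intros)
    have "integral {0..t} (\<lambda>s. r s ^ 4) \<le> integral {0..t} (\<lambda>s. 8 * (Ra s ^ 4 + Rb s ^ 4))"
      by (rule integral_le[OF ir4 i8]) (rule r4)
    then show ?thesis by (simp only: integral_mult_right)
  qed
  have "u t ^ 4 \<le> (r t + L * exp (L * t) * integral {0..t} r) ^ 4"
    using G by (intro power_mono) (auto simp: u_def)
  also have "\<dots> \<le> 8 * (r t ^ 4 + (L * exp (L * t) * integral {0..t} r) ^ 4)" by (rule pow4_add2)
  also have "(L * exp (L * t) * integral {0..t} r) ^ 4 = L^4 * exp (4 * L * t) * (integral {0..t} r)^4"
    by (simp add: power_mult_distrib exp_of_nat_mult[symmetric] mult.assoc)
  also have "\<dots> \<le> L^4 * exp (4 * L * t) * (t^3 * (8 * integral {0..t} (\<lambda>s. Ra s ^ 4 + Rb s ^ 4)))"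
  proof -
    have "t^3 * integral {0..t} (\<lambda>s. r s ^ 4) \<le> t^3 * (8 * integral {0..t} (\<lambda>s. Ra s ^ 4 + Rb s ^ 4))"
      using Ir4 t by (intro mult_left_mono) auto
    with J show ?thesis by (intro mult_left_mono) auto
  qed
  finally have "u t ^ 4 \<le> 8 * (r t ^ 4 + L^4 * exp (4 * L * t) * (t^3 * (8 * integral {0..t} (\<lambda>s. Ra s ^ 4 + Rb s ^ 4))))"
    by simp
  also have "\<dots> \<le> 8 * (8 * (Ra t ^ 4 + Rb t ^ 4) + L^4 * exp (4 * L * t) * (t^3 * (8 * integral {0..t} (\<lambda>s. Ra s ^ 4 + Rb s ^ 4))))"
    using r4[of t] by simp
  finally show ?thesis unfolding u_def by (simp add: algebra_simps)
qed




lemma le_one_plus_pow4: "0 \<le> (g::real) \<Longrightarrow> g \<le> 1 + g^4"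
proof (cases "g \<le> 1")
  case True
  have "0 \<le> g^4" by simp
  then show ?thesis using True by linarith
next
  case False
  then have "1 \<le> g^3" by (simp add: one_le_power)
  then have "g * 1 \<le> g * g^3" using False by (intro mult_left_mono) auto
  then show ?thesis by (simp add: power_numeral_reduce)
qed

lemma (in prob_space) nn_jensen4:
  fixes g :: "'a \<Rightarrow> real"
  assumes gm: "g \<in> borel_measurable M" and g0: "\<And>x. 0 \<le> g x"
  shows "ennreal ((\<integral>x. g x \<partial>M)^4) \<le> (\<integral>\<^sup>+x. ennreal (g x ^ 4) \<partial>M)"
proof (cases "(\<integral>\<^sup>+x. ennreal (g x ^ 4) \<partial>M) = \<infinity>")
  case True then show ?thesis by simp
next
  case False
  have i4: "integrable M (\<lambda>x. g x ^ 4)"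
  proof (rule integrableI_bounded)
    show "(\<lambda>x. g x ^ 4) \<in> borel_measurable M" using gm by measurable
    show "(\<integral>\<^sup>+x. ennreal (norm (g x ^ 4)) \<partial>M) < \<infinity>" using False g0 by (simp add: top.not_eq_extremum)
  qed
  have i1: "integrable M g"
  proof (rule Bochner_Integration.integrable_bound)
    show "integrable M (\<lambda>x. 1 + g x ^ 4)" using i4 by simp
    show "g \<in> borel_measurable M" by (rule gm)
    show "AE x in M. norm (g x) \<le> norm (1 + g x ^ 4)"
      using g0 le_one_plus_pow4 by (auto intro!: AE_I2)
  qed
  define c where "c = (\<integral>x. g x \<partial>M)"
  have "(\<integral>x. c^4 + 4*c^3*(g x - c) \<partial>M) \<le> (\<integral>x. g x ^ 4 \<partial>M)"
    by (rule integral_mono) (use i1 i4 tangent4 in auto)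
  moreover have "(\<integral>x. c^4 + 4*c^3*(g x - c) \<partial>M) = c^4"
    using i1 unfolding c_def by (simp add: prob_space)
  ultimately have "c^4 \<le> (\<integral>x. g x ^ 4 \<partial>M)" by simp
  moreover have "(\<integral>\<^sup>+x. ennreal (g x ^ 4) \<partial>M) = ennreal (\<integral>x. g x ^ 4 \<partial>M)"
    using i4 g0 by (intro nn_integral_eq_integral) auto
  ultimately show ?thesis unfolding c_def by (simp add: ennreal_leI)
qed


lemma main_bound:
  fixes b :: "real^'n \<Rightarrow> real \<Rightarrow> real^'n" and M :: "'w measure" and W X V :: "real \<Rightarrow> 'w \<Rightarrow> real^'n"
    and \<epsilon> L m4 t :: real and x :: "real^'n"
  assumes L: "L > 0" and lip: "\<And>y1 y2 s. s \<ge> 0 \<Longrightarrow> norm (b y1 s - b y2 s) \<le> L * norm (y1 - y2)"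
    and cb: "continuous_on (UNIV \<times> {0..}) (\<lambda>(y, s). b y s)"
    and \<epsilon>: "\<epsilon> > 0" and W: "is_std_BM M W" and sol: "langevin_solution M b \<epsilon> x W X V"
    and m4: "(\<integral>\<^sup>+\<omega>. ennreal (norm (V 0 \<omega> - b x 0) ^ 4) \<partial>M) \<le> ennreal m4"
    and t: "0 \<le> t"
  shows "integrable M (X t) \<and> (\<integral>\<^sup>+\<omega>. ennreal (norm (X t \<omega> - (\<integral>\<omega>'. X t \<omega>' \<partial>M)) ^ 4) \<partial>M)
     \<le> ennreal (12288 * (max m4 0 + real CARD('n)^2 + 1) * (1 + 256 * L^4) * (\<epsilon>^2 * t^2 + \<epsilon>^4) * exp ((4 * L + 1) * t))"
proof -
  note F = std_BM_facts[OF W]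
  interpret P: prob_space M by (rule F(1))
  interpret PS: pair_sigma_finite lborel M
    unfolding pair_sigma_finite_def using prob_space_imp_sigma_finite[OF F(1)] sigma_finite_lborel by auto
  define c where "c = sqrt (2 / \<epsilon>)"
  have c0: "0 \<le> c" unfolding c_def using \<epsilon> by simp
  have c2: "c^2 = 2 / \<epsilon>" unfolding c_def using \<epsilon> by simp
  have c4: "c^4 = 4 / \<epsilon>^2"
  proof -
    have "c^4 = (c^2)^2" by simp
    also have "\<dots> = 4 / \<epsilon>^2" unfolding c2 by (simp add: power_divide)
    finally show ?thesis .
  qed
  define q where "q \<equiv> \<lambda>s \<omega>. \<integral>\<^sup>+u. ennreal (indicator {0..s} u * exp (- (s - u) / \<epsilon>) * norm (W (max u 0) \<omega>)) \<partial>lborel"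
  have QF1: "(\<lambda>z. q (fst z) (snd z)) \<in> borel_measurable (lborel \<Otimes>\<^sub>M M)"
    unfolding q_def by (rule q_facts(1)[OF W \<epsilon>])
  have QF2: "q s \<omega> = ennreal (integral {0..s} (\<lambda>u. exp (- (s - u) / \<epsilon>) * norm (W u \<omega>)))"
    if "\<omega> \<in> space M" "0 \<le> s" for s \<omega>
    unfolding q_def by (rule q_facts(2)[OF W \<epsilon> that])
  have QF3: "(\<integral>\<^sup>+\<omega>. q s \<omega> ^ 4 \<partial>M) \<le> ennreal (3 * real CARD('n)^2 * \<epsilon>^4 * s^2)" if "0 \<le> s" for s
    unfolding q_def by (rule q_facts(3)[OF W \<epsilon> that])
  have solm: "\<And>s. 0 \<le> s \<Longrightarrow> X s \<in> borel_measurable M \<and> V s \<in> borel_measurable M"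
    using sol unfolding langevin_solution_def by blast
  have V0m[measurable]: "V 0 \<in> borel_measurable M" using solm[of 0] by simp
  define vt where "vt \<omega> = V 0 \<omega> - b x 0" for \<omega>
  have vtm[measurable]: "(\<lambda>\<omega>. norm (vt \<omega>) ^ 4) \<in> borel_measurable M" unfolding vt_def by measurable
  have QF1'[measurable]: "(\<lambda>z. q (fst z) (snd z)) \<in> borel_measurable (lborel \<Otimes>\<^sub>M M)" by (rule QF1)
  have qsm[measurable]: "(\<lambda>\<omega>. q s \<omega>) \<in> borel_measurable M" for s
    using measurable_compose[OF measurable_Pair1'[of s lborel M] QF1] by simp
  have q\<omega>m: "(\<lambda>s. q s \<omega>) \<in> borel_measurable lborel" if "\<omega> \<in> space M" for \<omega>
    using measurable_compose[OF measurable_Pair2'[OF that, of lborel] QF1] by simp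
  define Zb where "Zb s \<omega> = 8 * (ennreal (\<epsilon>^4) * ennreal (norm (vt \<omega>) ^ 4) + ennreal (c^4) * q s \<omega> ^ 4)" for s \<omega>
  define \<kappa> where "\<kappa> = 64 * L^4 * exp (4 * L * t) * t^3"
  define H where "H \<omega> = 64 * Zb t \<omega> + ennreal \<kappa> * (\<integral>\<^sup>+s. indicator {0..t} s * Zb s \<omega> \<partial>lborel)" for \<omega>
  define mm where "mm = max m4 0"
  define n where "n = real CARD('n)"
  define \<beta> where "\<beta> s = 8 * \<epsilon>^4 * mm + 96 * n^2 * \<epsilon>^2 * s^2" for s
  have \<kappa>0: "0 \<le> \<kappa>" unfolding \<kappa>_def using t L by simp
  have mm0: "0 \<le> mm" unfolding mm_def by simp
  have \<beta>0: "0 \<le> \<beta> s" for s unfolding \<beta>_def using mm0 \<epsilon> by simp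
  have \<beta>mono: "\<beta> s \<le> \<beta> t" if "s \<in> {0..t}" for s
    unfolding \<beta>_def using that \<epsilon> by (auto intro!: mult_left_mono power_mono)
  have Zbm2[measurable]: "(\<lambda>z. Zb (fst z) (snd z)) \<in> borel_measurable (lborel \<Otimes>\<^sub>M M)"
    unfolding Zb_def by measurable
  have Zbm[measurable]: "Zb s \<in> borel_measurable M" for s unfolding Zb_def by measurable
  have IZm: "(\<lambda>\<omega>. \<integral>\<^sup>+s. indicator {0..t} s * Zb s \<omega> \<partial>lborel) \<in> borel_measurable M"
  proof -
    have m1: "(\<lambda>z. indicator {0..t} (fst z) * Zb (fst z) (snd z)) \<in> borel_measurable (lborel \<Otimes>\<^sub>M M)"
      by measurable
    have "case_prod (\<lambda>\<omega> s. indicator {0..t} s * Zb s \<omega>) \<in> borel_measurable (M \<Otimes>\<^sub>M lborel)"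
      using measurable_compose[OF measurable_pair_swap' m1] by (simp add: case_prod_beta')
    then show ?thesis by (rule lborel.borel_measurable_nn_integral)
  qed
  have Hm[measurable]: "H \<in> borel_measurable M" unfolding H_def using IZm by measurable
  have EZ: "(\<integral>\<^sup>+\<omega>. Zb s \<omega> \<partial>M) \<le> ennreal (\<beta> s)" if s: "0 \<le> s" for s
  proof -
    have "(\<integral>\<^sup>+\<omega>. Zb s \<omega> \<partial>M) = 8 * (ennreal (\<epsilon>^4) * (\<integral>\<^sup>+\<omega>. ennreal (norm (vt \<omega>) ^ 4) \<partial>M) + ennreal (c^4) * (\<integral>\<^sup>+\<omega>. q s \<omega> ^ 4 \<partial>M))"
      unfolding Zb_def by (simp add: nn_integral_cmult nn_integral_add)
    also have "\<dots> \<le> 8 * (ennreal (\<epsilon>^4) * ennreal mm + ennreal (c^4) * ennreal (3 * n^2 * \<epsilon>^4 * s^2))"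
    proof (intro mult_left_mono add_mono order_refl)
      show "(\<integral>\<^sup>+\<omega>. ennreal (norm (vt \<omega>) ^ 4) \<partial>M) \<le> ennreal mm"
        using m4 unfolding vt_def mm_def by (rule order_trans) simp
      show "(\<integral>\<^sup>+\<omega>. q s \<omega> ^ 4 \<partial>M) \<le> ennreal (3 * n^2 * \<epsilon>^4 * s^2)"
        using QF3[OF s] unfolding n_def .
    qed auto
    also have "\<dots> = ennreal (8 * (\<epsilon>^4 * mm + c^4 * (3 * n^2 * \<epsilon>^4 * s^2)))"
    proof -
      have e1: "ennreal (\<epsilon>^4) * ennreal mm = ennreal (\<epsilon>^4 * mm)" by (rule ennreal_mult[symmetric]) (use mm0 in auto)
      have e2: "ennreal (c^4) * ennreal (3 * n^2 * \<epsilon>^4 * s^2) = ennreal (c^4 * (3 * n^2 * \<epsilon>^4 * s^2))"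
        by (rule ennreal_mult[symmetric]) auto
      have e3: "ennreal (\<epsilon>^4 * mm) + ennreal (c^4 * (3 * n^2 * \<epsilon>^4 * s^2)) = ennreal (\<epsilon>^4 * mm + c^4 * (3 * n^2 * \<epsilon>^4 * s^2))"
        by (rule ennreal_plus[symmetric]) (use mm0 in auto)
      have e4: "(8::ennreal) * ennreal z = ennreal (8 * z)" if "0 \<le> z" for z
        using ennreal_mult[of 8 z] that by simp
      have z0: "0 \<le> \<epsilon>^4 * mm + c^4 * (3 * n^2 * \<epsilon>^4 * s^2)" using mm0 by simp
      show ?thesis unfolding e1 e2 e3 e4[OF z0] ..
    qed
    also have "8 * (\<epsilon>^4 * mm + c^4 * (3 * n^2 * \<epsilon>^4 * s^2)) = \<beta> s"
      unfolding c4 \<beta>_def using \<epsilon> by (simp add: field_simps power_numeral_reduce)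
    finally show ?thesis .
  qed
  have EIZ: "(\<integral>\<^sup>+\<omega>. (\<integral>\<^sup>+s. indicator {0..t} s * Zb s \<omega> \<partial>lborel) \<partial>M) \<le> ennreal (t * \<beta> t)"
  proof -
    have "(\<integral>\<^sup>+\<omega>. (\<integral>\<^sup>+s. indicator {0..t} s * Zb s \<omega> \<partial>lborel) \<partial>M) = (\<integral>\<^sup>+s. (\<integral>\<^sup>+\<omega>. indicator {0..t} s * Zb s \<omega> \<partial>M) \<partial>lborel)"
    proof -
      have "case_prod (\<lambda>s \<omega>. indicator {0..t} s * Zb s \<omega>) \<in> borel_measurable (lborel \<Otimes>\<^sub>M M)"
        unfolding case_prod_beta' by measurable
      from PS.Fubini'[OF this] show ?thesis .
    qed
    also have "\<dots> \<le> (\<integral>\<^sup>+s. ennreal (\<beta> t) * indicator {0..t} s \<partial>lborel)"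
    proof (intro nn_integral_mono)
      fix s :: real
      show "(\<integral>\<^sup>+\<omega>. indicator {0..t} s * Zb s \<omega> \<partial>M) \<le> ennreal (\<beta> t) * indicator {0..t} s"
      proof (cases "s \<in> {0..t}")
        case True
        have "(\<integral>\<^sup>+\<omega>. indicator {0..t} s * Zb s \<omega> \<partial>M) = (\<integral>\<^sup>+\<omega>. Zb s \<omega> \<partial>M)" using True by simp
        also have "\<dots> \<le> ennreal (\<beta> s)" using EZ[of s] True by simp
        also have "\<dots> \<le> ennreal (\<beta> t)" using \<beta>mono[OF True] by (rule ennreal_leI)
        finally show ?thesis using True by simp
      qed simp
    qed
    also have "\<dots> = ennreal (\<beta> t) * ennreal t"
      using t by (subst nn_integral_cmult_indicator) auto
    also have "\<dots> = ennreal (t * \<beta> t)" using t \<beta>0 ennreal_mult[of "\<beta> t" t] by (simp add: mult.commute)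
    finally show ?thesis .
  qed
  define EH where "EH = (\<integral>\<^sup>+\<omega>. H \<omega> \<partial>M)"
  have EHb: "EH \<le> ennreal (64 * \<beta> t + \<kappa> * (t * \<beta> t))"
  proof -
    have "EH = 64 * (\<integral>\<^sup>+\<omega>. Zb t \<omega> \<partial>M) + ennreal \<kappa> * (\<integral>\<^sup>+\<omega>. (\<integral>\<^sup>+s. indicator {0..t} s * Zb s \<omega> \<partial>lborel) \<partial>M)"
      unfolding EH_def H_def using IZm by (simp add: nn_integral_cmult nn_integral_add)
    also have "\<dots> \<le> 64 * ennreal (\<beta> t) + ennreal \<kappa> * ennreal (t * \<beta> t)"
      by (intro add_mono mult_left_mono EZ EIZ t) auto
    also have "\<dots> = ennreal (64 * \<beta> t + \<kappa> * (t * \<beta> t))"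
    proof -
      have e1: "(64::ennreal) * ennreal (\<beta> t) = ennreal (64 * \<beta> t)" using ennreal_mult[of 64 "\<beta> t"] \<beta>0 by simp
      have e2: "ennreal \<kappa> * ennreal (t * \<beta> t) = ennreal (\<kappa> * (t * \<beta> t))"
        by (rule ennreal_mult[symmetric]) (use \<kappa>0 \<beta>0 t in auto)
      have e3: "ennreal (64 * \<beta> t) + ennreal (\<kappa> * (t * \<beta> t)) = ennreal (64 * \<beta> t + \<kappa> * (t * \<beta> t))"
        by (rule ennreal_plus[symmetric]) (use \<kappa>0 \<beta>0 t in auto)
      show ?thesis unfolding e1 e2 e3 ..
    qed
    finally show ?thesis .
  qed
  define G where "G \<omega> \<longleftrightarrow> \<omega> \<in> space M \<and> continuous_on {0..} (\<lambda>t. X t \<omega>) \<and> continuous_on {0..} (\<lambda>t. V t \<omega>) \<and>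
        (\<forall>t\<ge>0. X t \<omega> = x + integral {0..t} (\<lambda>s. V s \<omega>) \<and>
                V t \<omega> = V 0 \<omega> + (1 / \<epsilon>) *\<^sub>R integral {0..t} (\<lambda>s. b (X s \<omega>) s - V s \<omega>)
                         + sqrt (2 / \<epsilon>) *\<^sub>R W t \<omega>)" for \<omega>
  have AEG: "AE \<omega> in M. G \<omega>"
  proof -
    have "AE \<omega> in M. continuous_on {0..} (\<lambda>t. X t \<omega>) \<and> continuous_on {0..} (\<lambda>t. V t \<omega>) \<and>
        (\<forall>t\<ge>0. X t \<omega> = x + integral {0..t} (\<lambda>s. V s \<omega>) \<and>
                V t \<omega> = V 0 \<omega> + (1 / \<epsilon>) *\<^sub>R integral {0..t} (\<lambda>s. b (X s \<omega>) s - V s \<omega>)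
                         + sqrt (2 / \<epsilon>) *\<^sub>R W t \<omega>)"
      using sol unfolding langevin_solution_def by blast
    then show ?thesis unfolding G_def by (rule AE_conjI[OF AE_space])
  qed
  have form: "X s \<omega> = x + (\<epsilon> * (1 - exp (- s / \<epsilon>))) *\<^sub>R V 0 \<omega>
      + integral {0..s} (\<lambda>u. (1 - exp (- (s - u) / \<epsilon>)) *\<^sub>R b (X u \<omega>) u)
      + c *\<^sub>R integral {0..s} (\<lambda>u. exp (- (s - u) / \<epsilon>) *\<^sub>R W u \<omega>)"
    if G: "G \<omega>" and s: "0 \<le> s" for \<omega> s
  proof -
    have \<omega>: "\<omega> \<in> space M" using G unfolding G_def by blast
    have cX: "continuous_on {0..} (\<lambda>t. X t \<omega>)" and cV: "continuous_on {0..} (\<lambda>t. V t \<omega>)"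
      using G unfolding G_def by blast+
    have sub: "{0..s} \<subseteq> {0::real..}" by auto
    have cbeta: "continuous_on {0..} (\<lambda>u. b (X u \<omega>) u)"
    proof -
      have "continuous_on {0..} (\<lambda>u. (\<lambda>(y, s). b y s) (X u \<omega>, u))"
        by (rule continuous_on_compose2[OF cb]) (use cX in \<open>auto intro!: continuous_intros\<close>)
      then show ?thesis by simp
    qed
    show ?thesis
    proof (rule langevin_pathwise[where X="\<lambda>u. X u \<omega>" and V="\<lambda>u. V u \<omega>" and W="\<lambda>u. W u \<omega>"
          and \<beta>="\<lambda>u. b (X u \<omega>) u" and x=x and c=c and T=s, OF \<epsilon> s])
      show "continuous_on {0..s} (\<lambda>u. V u \<omega>)" using continuous_on_subset[OF cV sub] .
      show "continuous_on {0..s} (\<lambda>u. W u \<omega>)" using continuous_on_subset[OF F(2)[OF \<omega>] sub] .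
      show "continuous_on {0..s} (\<lambda>u. b (X u \<omega>) u)" using continuous_on_subset[OF cbeta sub] .
      fix r assume r: "r \<in> {0..s}"
      then have r0: "0 \<le> r" by simp
      show "X r \<omega> = x + integral {0..r} (\<lambda>u. V u \<omega>)" using G r0 unfolding G_def by blast
      show "V r \<omega> = V 0 \<omega> + (1 / \<epsilon>) *\<^sub>R integral {0..r} (\<lambda>u. b (X u \<omega>) u - V u \<omega>) + c *\<^sub>R W r \<omega>"
        using G r0 unfolding G_def c_def by blast
    qed
  qed
  define \<rho> where "\<rho> s \<omega> = integral {0..s} (\<lambda>u. exp (- (s - u) / \<epsilon>) * norm (W u \<omega>))" for s \<omega>
  have Zb_ge: "ennreal ((\<epsilon> * norm (vt \<omega>) + c * \<rho> s \<omega>) ^ 4) \<le> Zb s \<omega>" if \<omega>: "\<omega> \<in> space M" and s: "0 \<le> s" for \<omega> s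
  proof -
    have \<rho>0: "0 \<le> \<rho> s \<omega>"
      unfolding \<rho>_def
      using continuous_on_subset[OF F(2)[OF \<omega>], of "{0..s}"] \<epsilon>
      by (intro integral_nonneg integrable_continuous_interval continuous_intros) auto
    have "(\<epsilon> * norm (vt \<omega>) + c * \<rho> s \<omega>) ^ 4 \<le> 8 * ((\<epsilon> * norm (vt \<omega>))^4 + (c * \<rho> s \<omega>)^4)"
      by (rule pow4_add2)
    also have "\<dots> = 8 * (\<epsilon>^4 * norm (vt \<omega>) ^ 4 + c^4 * \<rho> s \<omega> ^ 4)" by (simp add: power_mult_distrib)
    finally have r: "(\<epsilon> * norm (vt \<omega>) + c * \<rho> s \<omega>) ^ 4 \<le> 8 * (\<epsilon>^4 * norm (vt \<omega>) ^ 4 + c^4 * \<rho> s \<omega> ^ 4)" .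
    have eqZ: "ennreal (8 * (\<epsilon>^4 * norm (vt \<omega>) ^ 4 + c^4 * \<rho> s \<omega> ^ 4)) = Zb s \<omega>"
    proof -
      have e1: "ennreal (\<epsilon>^4 * norm (vt \<omega>) ^ 4) = ennreal (\<epsilon>^4) * ennreal (norm (vt \<omega>) ^ 4)"
        by (rule ennreal_mult) auto
      have e2: "ennreal (c^4 * \<rho> s \<omega> ^ 4) = ennreal (c^4) * q s \<omega> ^ 4"
        using ennreal_mult[of "c^4" "\<rho> s \<omega> ^ 4"] \<rho>0 QF2[OF \<omega> s] unfolding \<rho>_def by (simp add: ennreal_power)
      have e3: "ennreal (\<epsilon>^4 * norm (vt \<omega>) ^ 4 + c^4 * \<rho> s \<omega> ^ 4) = ennreal (\<epsilon>^4 * norm (vt \<omega>) ^ 4) + ennreal (c^4 * \<rho> s \<omega> ^ 4)"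
        by (rule ennreal_plus) (use \<rho>0 in auto)
      have e4: "ennreal (8 * z) = (8::ennreal) * ennreal z" if "0 \<le> z" for z
        using ennreal_mult[of 8 z] that by simp
      have z0: "0 \<le> \<epsilon>^4 * norm (vt \<omega>) ^ 4 + c^4 * \<rho> s \<omega> ^ 4" using \<rho>0 by simp
      show ?thesis unfolding e4[OF z0] e3 e1 e2 Zb_def ..
    qed
    show ?thesis by (subst eqZ[symmetric]) (rule ennreal_leI[OF r])
  qed
  have \<rho>0: "0 \<le> \<rho> s \<omega>" if \<omega>: "\<omega> \<in> space M" for s \<omega>
    unfolding \<rho>_def
    using continuous_on_subset[OF F(2)[OF \<omega>], of "{0..s}"] \<epsilon>
    by (intro integral_nonneg integrable_continuous_interval continuous_intros) auto
  have pw: "ennreal (norm (X t \<omega> - X t \<omega>') ^ 4) \<le> H \<omega> + H \<omega>'" if Ga: "G \<omega>" and Gb: "G \<omega>'" for \<omega> \<omega>'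
  proof -
    have \<omega>a: "\<omega> \<in> space M" and \<omega>b: "\<omega>' \<in> space M" using Ga Gb unfolding G_def by blast+
    have cXa: "continuous_on {0..} (\<lambda>u. X u \<omega>)" and cXb: "continuous_on {0..} (\<lambda>u. X u \<omega>')"
      using Ga Gb unfolding G_def by blast+
    define Ra where "Ra s = \<epsilon> * norm (vt \<omega>) + c * \<rho> s \<omega>" for s
    define Rb where "Rb s = \<epsilon> * norm (vt \<omega>') + c * \<rho> s \<omega>'" for s
    have real: "norm (X t \<omega> - X t \<omega>') ^ 4 \<le> 64 * (Ra t ^ 4 + Rb t ^ 4) + \<kappa> * integral {0..t} (\<lambda>s. Ra s ^ 4 + Rb s ^ 4)"
      unfolding Ra_def Rb_def vt_def \<rho>_def \<kappa>_def
      by (rule pair_pathwise[where Xa="\<lambda>u. X u \<omega>" and Xb="\<lambda>u. X u \<omega>'" and Wa="\<lambda>u. W u \<omega>" and Wb="\<lambda>u. W u \<omega>'"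
            and va="V 0 \<omega>" and vb="V 0 \<omega>'" and w="b x 0" and x=x and c=c,
            OF \<epsilon> L t c0 lip cb cXa cXb F(2)[OF \<omega>a] F(2)[OF \<omega>b] form[OF Ga] form[OF Gb]])
    have Ra0: "0 \<le> Ra s" for s unfolding Ra_def using \<rho>0[OF \<omega>a] c0 \<epsilon> by simp
    have Rb0: "0 \<le> Rb s" for s unfolding Rb_def using \<rho>0[OF \<omega>b] c0 \<epsilon> by simp
    have cR: "continuous_on {0..t} (\<lambda>s. Ra s ^ 4 + Rb s ^ 4)"
    proof -
      have sub: "{0..t} \<subseteq> {0::real..}" by auto
      have ca: "continuous_on {0..t} (\<lambda>u. norm (W u \<omega>))"
        using continuous_on_subset[OF F(2)[OF \<omega>a] sub] by (intro continuous_intros)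
      have cb': "continuous_on {0..t} (\<lambda>u. norm (W u \<omega>'))"
        using continuous_on_subset[OF F(2)[OF \<omega>b] sub] by (intro continuous_intros)
      show ?thesis unfolding Ra_def Rb_def \<rho>_def
        using rho_cont[OF \<epsilon> ca] rho_cont[OF \<epsilon> cb'] by (intro continuous_intros)
    qed
    have I: "ennreal (integral {0..t} (\<lambda>s. Ra s ^ 4 + Rb s ^ 4))
        = (\<integral>\<^sup>+s. ennreal (indicator {0..t} s * (Ra s ^ 4 + Rb s ^ 4)) \<partial>lborel)"
      by (rule nn_integral_interval_cont[OF cR, symmetric]) (use Ra0 Rb0 in simp)
    also have "\<dots> \<le> (\<integral>\<^sup>+s. indicator {0..t} s * Zb s \<omega> + indicator {0..t} s * Zb s \<omega>' \<partial>lborel)"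
    proof (intro nn_integral_mono)
      fix s :: real
      show "ennreal (indicator {0..t} s * (Ra s ^ 4 + Rb s ^ 4)) \<le> indicator {0..t} s * Zb s \<omega> + indicator {0..t} s * Zb s \<omega>'"
      proof (cases "s \<in> {0..t}")
        case True
        then have s0: "0 \<le> s" by simp
        have "ennreal (Ra s ^ 4 + Rb s ^ 4) = ennreal (Ra s ^ 4) + ennreal (Rb s ^ 4)"
          by (rule ennreal_plus) auto
        also have "\<dots> \<le> Zb s \<omega> + Zb s \<omega>'"
          unfolding Ra_def Rb_def by (intro add_mono Zb_ge \<omega>a \<omega>b s0)
        finally show ?thesis using True by simp
      qed simp
    qed
    also have "\<dots> = (\<integral>\<^sup>+s. indicator {0..t} s * Zb s \<omega> \<partial>lborel) + (\<integral>\<^sup>+s. indicator {0..t} s * Zb s \<omega>' \<partial>lborel)"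
    proof (rule nn_integral_add)
      have [measurable]: "(\<lambda>s. q s \<omega>) \<in> borel_measurable lborel" "(\<lambda>s. q s \<omega>') \<in> borel_measurable lborel"
        using q\<omega>m[OF \<omega>a] q\<omega>m[OF \<omega>b] by auto
      show "(\<lambda>s. indicator {0..t} s * Zb s \<omega>) \<in> borel_measurable lborel" unfolding Zb_def by measurable
      show "(\<lambda>s. indicator {0..t} s * Zb s \<omega>') \<in> borel_measurable lborel" unfolding Zb_def by measurable
    qed
    finally have Ib: "ennreal (integral {0..t} (\<lambda>s. Ra s ^ 4 + Rb s ^ 4))
        \<le> (\<integral>\<^sup>+s. indicator {0..t} s * Zb s \<omega> \<partial>lborel) + (\<integral>\<^sup>+s. indicator {0..t} s * Zb s \<omega>' \<partial>lborel)" .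
    have Tb: "ennreal (64 * (Ra t ^ 4 + Rb t ^ 4)) \<le> 64 * Zb t \<omega> + 64 * Zb t \<omega>'"
    proof -
      have "ennreal (64 * (Ra t ^ 4 + Rb t ^ 4)) = 64 * (ennreal (Ra t ^ 4) + ennreal (Rb t ^ 4))"
        using ennreal_mult[of 64 "Ra t ^ 4 + Rb t ^ 4"] ennreal_plus[of "Ra t ^ 4" "Rb t ^ 4"] by simp
      also have "\<dots> \<le> 64 * (Zb t \<omega> + Zb t \<omega>')"
        unfolding Ra_def Rb_def by (intro mult_left_mono add_mono Zb_ge \<omega>a \<omega>b t) auto
      finally show ?thesis by (simp add: distrib_left)
    qed
    have I0: "0 \<le> integral {0..t} (\<lambda>s. Ra s ^ 4 + Rb s ^ 4)"
      using cR Ra0 Rb0 by (intro integral_nonneg integrable_continuous_interval) auto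
    have "ennreal (norm (X t \<omega> - X t \<omega>') ^ 4) \<le> ennreal (64 * (Ra t ^ 4 + Rb t ^ 4) + \<kappa> * integral {0..t} (\<lambda>s. Ra s ^ 4 + Rb s ^ 4))"
      by (rule ennreal_leI[OF real])
    also have "\<dots> = ennreal (64 * (Ra t ^ 4 + Rb t ^ 4)) + ennreal \<kappa> * ennreal (integral {0..t} (\<lambda>s. Ra s ^ 4 + Rb s ^ 4))"
      using \<kappa>0 I0 Ra0 Rb0 by (simp add: ennreal_plus ennreal_mult)
    also have "\<dots> \<le> (64 * Zb t \<omega> + 64 * Zb t \<omega>') + ennreal \<kappa> * ((\<integral>\<^sup>+s. indicator {0..t} s * Zb s \<omega> \<partial>lborel) + (\<integral>\<^sup>+s. indicator {0..t} s * Zb s \<omega>' \<partial>lborel))"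
      by (intro add_mono Tb mult_left_mono Ib) auto
    also have "\<dots> = H \<omega> + H \<omega>'" unfolding H_def by (simp add: distrib_left add_ac)
    finally show ?thesis .
  qed
  have EHfin: "EH \<noteq> \<infinity>" using EHb by (auto simp: top_unique)
  have AEH: "AE \<omega> in M. H \<omega> \<noteq> \<infinity>" using nn_integral_PInf_AE[OF Hm] EHfin unfolding EH_def by auto
  have "\<exists>\<omega>\<in>space M. G \<omega> \<and> H \<omega> \<noteq> \<infinity>"
  proof (rule ccontr)
    assume neg: "\<not> (\<exists>\<omega>\<in>space M. G \<omega> \<and> H \<omega> \<noteq> \<infinity>)"
    have "AE \<omega> in M. False" using AEG AEH AE_space by eventually_elim (use neg in blast)
    then show False using P.AE_False by simp
  qed
  then obtain \<omega>0 where \<omega>0: "\<omega>0 \<in> space M" "G \<omega>0" "H \<omega>0 \<noteq> \<infinity>" by blast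
  have Xtm[measurable]: "X t \<in> borel_measurable M" using solm[OF t] by blast
  have inner: "(\<integral>\<^sup>+\<omega>'. ennreal (norm (X t \<omega> - X t \<omega>') ^ 4) \<partial>M) \<le> H \<omega> + EH" if G\<omega>: "G \<omega>" for \<omega>
  proof -
    have "(\<integral>\<^sup>+\<omega>'. ennreal (norm (X t \<omega> - X t \<omega>') ^ 4) \<partial>M) \<le> (\<integral>\<^sup>+\<omega>'. H \<omega> + H \<omega>' \<partial>M)"
    proof (rule nn_integral_mono_AE)
      show "AE \<omega>' in M. ennreal (norm (X t \<omega> - X t \<omega>') ^ 4) \<le> H \<omega> + H \<omega>'"
        using AEG by eventually_elim (rule pw[OF G\<omega>])
    qed
    also have "\<dots> = H \<omega> + EH" unfolding EH_def using P.emeasure_space_1 by (simp add: nn_integral_add)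
    finally show ?thesis .
  qed
  have D4: "(\<integral>\<^sup>+\<omega>. ennreal (norm (X t \<omega> - X t \<omega>0) ^ 4) \<partial>M) \<le> EH + H \<omega>0"
  proof -
    have "(\<integral>\<^sup>+\<omega>. ennreal (norm (X t \<omega> - X t \<omega>0) ^ 4) \<partial>M) = (\<integral>\<^sup>+\<omega>. ennreal (norm (X t \<omega>0 - X t \<omega>) ^ 4) \<partial>M)"
      by (simp add: norm_minus_commute)
    also have "\<dots> \<le> H \<omega>0 + EH" by (rule inner[OF \<omega>0(2)])
    finally show ?thesis by (simp add: add.commute)
  qed
  have intX: "integrable M (X t)"
  proof (rule integrableI_bounded[OF Xtm])
    have "(\<integral>\<^sup>+\<omega>. ennreal (norm (X t \<omega>)) \<partial>M) \<le> (\<integral>\<^sup>+\<omega>. ennreal (norm (X t \<omega>0) + 1) + ennreal (norm (X t \<omega> - X t \<omega>0) ^ 4) \<partial>M)"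
    proof (intro nn_integral_mono)
      fix \<omega>
      have "norm (X t \<omega>) \<le> norm (X t \<omega>0) + norm (X t \<omega> - X t \<omega>0)" by (metis norm_triangle_sub)
      also have "\<dots> \<le> norm (X t \<omega>0) + (1 + norm (X t \<omega> - X t \<omega>0) ^ 4)"
        using le_one_plus_pow4[of "norm (X t \<omega> - X t \<omega>0)"] by simp
      finally have "norm (X t \<omega>) \<le> (norm (X t \<omega>0) + 1) + norm (X t \<omega> - X t \<omega>0) ^ 4" by simp
      then have "ennreal (norm (X t \<omega>)) \<le> ennreal ((norm (X t \<omega>0) + 1) + norm (X t \<omega> - X t \<omega>0) ^ 4)"
        by (rule ennreal_leI)
      also have "\<dots> = ennreal (norm (X t \<omega>0) + 1) + ennreal (norm (X t \<omega> - X t \<omega>0) ^ 4)"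
        by (rule ennreal_plus) auto
      finally show "ennreal (norm (X t \<omega>)) \<le> ennreal (norm (X t \<omega>0) + 1) + ennreal (norm (X t \<omega> - X t \<omega>0) ^ 4)" .
    qed
    also have "\<dots> = ennreal (norm (X t \<omega>0) + 1) + (\<integral>\<^sup>+\<omega>. ennreal (norm (X t \<omega> - X t \<omega>0) ^ 4) \<partial>M)"
      using P.emeasure_space_1 by (simp add: nn_integral_add)
    also have "\<dots> < \<infinity>"
    proof -
      have "(\<integral>\<^sup>+\<omega>. ennreal (norm (X t \<omega> - X t \<omega>0) ^ 4) \<partial>M) < \<infinity>"
        using D4 EHfin \<omega>0(3) by (simp add: le_less_trans top.not_eq_extremum ennreal_add_less_top)
      then show ?thesis by (simp add: ennreal_add_less_top)
    qed
    finally show "(\<integral>\<^sup>+\<omega>. ennreal (norm (X t \<omega>)) \<partial>M) < \<infinity>" .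
  qed
  have Yb: "ennreal (norm (X t \<omega> - (\<integral>\<omega>'. X t \<omega>' \<partial>M)) ^ 4) \<le> (\<integral>\<^sup>+\<omega>'. ennreal (norm (X t \<omega> - X t \<omega>') ^ 4) \<partial>M)"
    if \<omega>: "\<omega> \<in> space M" for \<omega>
  proof -
    have "X t \<omega> - (\<integral>\<omega>'. X t \<omega>' \<partial>M) = (\<integral>\<omega>'. (X t \<omega> - X t \<omega>') \<partial>M)"
      using intX by (simp add: P.prob_space)
    then have "norm (X t \<omega> - (\<integral>\<omega>'. X t \<omega>' \<partial>M)) \<le> (\<integral>\<omega>'. norm (X t \<omega> - X t \<omega>') \<partial>M)"
      by (simp add: integral_norm_bound)
    then have "norm (X t \<omega> - (\<integral>\<omega>'. X t \<omega>' \<partial>M)) ^ 4 \<le> (\<integral>\<omega>'. norm (X t \<omega> - X t \<omega>') \<partial>M) ^ 4"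
      by (intro power_mono) auto
    then have "ennreal (norm (X t \<omega> - (\<integral>\<omega>'. X t \<omega>' \<partial>M)) ^ 4) \<le> ennreal ((\<integral>\<omega>'. norm (X t \<omega> - X t \<omega>') \<partial>M) ^ 4)"
      by (rule ennreal_leI)
    also have "\<dots> \<le> (\<integral>\<^sup>+\<omega>'. ennreal (norm (X t \<omega> - X t \<omega>') ^ 4) \<partial>M)"
    proof -
      have gm: "(\<lambda>\<omega>'. norm (X t \<omega> - X t \<omega>')) \<in> borel_measurable M" by measurable
      show ?thesis by (rule P.nn_jensen4[OF gm]) simp
    qed
    finally show ?thesis .
  qed
  have "(\<integral>\<^sup>+\<omega>. ennreal (norm (X t \<omega> - (\<integral>\<omega>'. X t \<omega>' \<partial>M)) ^ 4) \<partial>M)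
      \<le> (\<integral>\<^sup>+\<omega>. (\<integral>\<^sup>+\<omega>'. ennreal (norm (X t \<omega> - X t \<omega>') ^ 4) \<partial>M) \<partial>M)"
    by (rule nn_integral_mono) (rule Yb)
  also have "\<dots> \<le> (\<integral>\<^sup>+\<omega>. H \<omega> + EH \<partial>M)"
  proof (rule nn_integral_mono_AE)
    show "AE \<omega> in M. (\<integral>\<^sup>+\<omega>'. ennreal (norm (X t \<omega> - X t \<omega>') ^ 4) \<partial>M) \<le> H \<omega> + EH"
      using AEG by eventually_elim (rule inner)
  qed
  also have "\<dots> = EH + EH" unfolding EH_def using P.emeasure_space_1 by (simp add: nn_integral_add)
  also have "\<dots> \<le> ennreal (64 * \<beta> t + \<kappa> * (t * \<beta> t)) + ennreal (64 * \<beta> t + \<kappa> * (t * \<beta> t))"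
    by (intro add_mono EHb)
  also have "\<dots> = ennreal (2 * (64 * \<beta> t + \<kappa> * (t * \<beta> t)))"
  proof -
    have z0: "0 \<le> 64 * \<beta> t + \<kappa> * (t * \<beta> t)" using \<beta>0[of t] \<kappa>0 t by simp
    show ?thesis using ennreal_plus[OF z0 z0] by (simp only: mult_2)
  qed
  also have "\<dots> \<le> ennreal (12288 * (max m4 0 + real CARD('n)^2 + 1) * (1 + 256 * L^4) * (\<epsilon>^2 * t^2 + \<epsilon>^4) * exp ((4 * L + 1) * t))"
  proof (rule ennreal_leI)
    define P where "P = mm + n^2 + 1"
    define E where "E = \<epsilon>^2 * t^2 + \<epsilon>^4"
    have P0: "0 \<le> P" unfolding P_def using mm0 by simp
    have E0: "0 \<le> E" unfolding E_def by simp
    have \<beta>b: "\<beta> t \<le> 96 * P * E"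
    proof -
      have "8 * \<epsilon>^4 * mm \<le> 96 * P * \<epsilon>^4" unfolding P_def using mm0 by (simp add: algebra_simps)
      moreover have "96 * n^2 * \<epsilon>^2 * t^2 \<le> 96 * P * (\<epsilon>^2 * t^2)" unfolding P_def using mm0 by (simp add: algebra_simps)
      ultimately show ?thesis unfolding \<beta>_def E_def by (simp add: algebra_simps)
    qed
    have t4: "t^4 \<le> 256 * exp t"
    proof -
      have "(1 + t / real 4) ^ 4 \<le> exp t" by (rule exp_ge_one_plus_x_over_n_power_n) (use t in auto)
      moreover have "(t / 4) ^ 4 \<le> (1 + t / 4) ^ 4" using t by (intro power_mono) auto
      ultimately have "(t / 4) ^ 4 \<le> exp t" by simp
      then show ?thesis by (simp add: power_divide)
    qed
    have ee: "exp (4 * L * t) * exp t = exp ((4 * L + 1) * t)" by (simp add: mult_exp_exp algebra_simps)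
    have e1: "1 \<le> exp ((4 * L + 1) * t)" using L t by simp
    have "2 * (64 + \<kappa> * t) = 128 + 128 * L^4 * exp (4 * L * t) * t^4"
      unfolding \<kappa>_def by (simp add: power_numeral_reduce algebra_simps)
    also have "\<dots> \<le> 128 * exp ((4 * L + 1) * t) + 128 * L^4 * exp (4 * L * t) * (256 * exp t)"
      using e1 t4 L by (intro add_mono mult_left_mono) auto
    also have "\<dots> = 128 * (1 + 256 * L^4) * exp ((4 * L + 1) * t)"
      unfolding ee[symmetric] by (simp add: algebra_simps)
    finally have k: "2 * (64 + \<kappa> * t) \<le> 128 * (1 + 256 * L^4) * exp ((4 * L + 1) * t)" .
    have "2 * (64 * \<beta> t + \<kappa> * (t * \<beta> t)) = (2 * (64 + \<kappa> * t)) * \<beta> t" by (simp add: algebra_simps)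
    also have "\<dots> \<le> (128 * (1 + 256 * L^4) * exp ((4 * L + 1) * t)) * (96 * P * E)"
      by (rule mult_mono[OF k \<beta>b _ \<beta>0]) simp
    also have "\<dots> = 12288 * P * (1 + 256 * L^4) * E * exp ((4 * L + 1) * t)" by (simp add: algebra_simps)
    finally show "2 * (64 * \<beta> t + \<kappa> * (t * \<beta> t)) \<le> 12288 * (max m4 0 + real CARD('n)^2 + 1) * (1 + 256 * L^4) * (\<epsilon>^2 * t^2 + \<epsilon>^4) * exp ((4 * L + 1) * t)"
      unfolding P_def E_def mm_def n_def .
  qed
  finally show ?thesis using intX by blast
qed


theorem lemma6p1:
  fixes b :: "real^'n \<Rightarrow> real \<Rightarrow> real^'n" and m4 :: real
  assumes smooth: "smooth_bounded (\<lambda>(y, t). b y t) (UNIV \<times> {0..})"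
    and periodic: "\<And>y t v. (\<forall>i. v $ i \<in> \<int>) \<Longrightarrow> b (y + v) t = b y t"
  shows "\<exists>C1>0. \<exists>C2>0. \<forall>(M :: 'w measure) W X V (\<epsilon>::real) x (p::real).
     \<epsilon> > 0 \<and> p \<ge> 4 \<and> is_std_BM M W \<and>
     prob_space.indep_set M (sets (vimage_algebra (space M) (V 0) borel))
       (sets (vimage_algebra (space M) (\<lambda>\<omega>. \<lambda>t\<in>{0..}. W t \<omega>) (PiM {0..} (\<lambda>_. borel)))) \<and>
     langevin_solution M b \<epsilon> x W X V \<and>
     integrable M (\<lambda>\<omega>. V 0 \<omega> - b x 0) \<and> (\<integral>\<omega>. (V 0 \<omega> - b x 0) \<partial>M) = 0 \<and>
     (\<integral>\<^sup>+\<omega>. ennreal (norm (V 0 \<omega> - b x 0) powr p) \<partial>M) < \<infinity> \<and>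
     (\<integral>\<^sup>+\<omega>. ennreal (norm (V 0 \<omega> - b x 0) ^ 4) \<partial>M) \<le> ennreal m4
     \<longrightarrow> (\<forall>t\<ge>0. integrable M (X t) \<and>
           (\<integral>\<^sup>+\<omega>. ennreal (norm (X t \<omega> - (\<integral>\<omega>'. X t \<omega>' \<partial>M)) ^ 4) \<partial>M)
             \<le> ennreal (C1 * (\<epsilon>\<^sup>2 * t\<^sup>2 + \<epsilon> ^ 4) * exp (C2 * t)))"
proof -
  obtain L where L: "L > 0"
    and lip: "\<And>y1 y2 t. t \<ge> 0 \<Longrightarrow> norm (b y1 t - b y2 t) \<le> L * norm (y1 - y2)"
    and cb: "continuous_on (UNIV \<times> {0..}) (\<lambda>(y, t). b y t)"
    using smooth_lipschitz[OF smooth] by blast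
  define C1 where "C1 = 12288 * (max m4 0 + real CARD('n)^2 + 1) * (1 + 256 * L^4)"
  have a1: "0 < max m4 0 + real CARD('n)^2 + 1"
  proof -
    have "0 \<le> max m4 0" by simp
    moreover have "0 \<le> real CARD('n)^2" by simp
    ultimately show ?thesis by linarith
  qed
  have a2: "0 < 1 + 256 * L^4"
  proof -
    have "0 < L^4" using L by simp
    then show ?thesis by linarith
  qed
  have C1p: "C1 > 0" unfolding C1_def using a1 a2 by simp
  have C2p: "4 * L + 1 > 0" using L by simp
  show ?thesis
    apply (rule exI[of _ C1], rule conjI[OF C1p], rule exI[of _ "4 * L + 1"], rule conjI[OF C2p])
    apply (intro allI impI)
    apply (elim conjE)
    apply (unfold C1_def)
    apply (rule main_bound[OF L lip cb]; assumption)
    done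
qed

end
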